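(* Let $m,T>0$, $\gamma=\frac{T}{\pi m}$, and let $\bar{\mathcal{L}}=-\partial_t^4+\gamma^2\partial_t^2$ on $\mathrm{L}^2([0,\pi],\mathbb{R})$ with domain $\{x\in \mathrm{H}^4([0,\pi]): x(0)=x(\pi)=0,\ \tfrac{T}{\pi\gamma}x''(0)=x'(0),\ \tfrac{T}{\pi\gamma}x''(\pi)=-x'(\pi)\}$. Let $\lambda_k$, $k\in\mathbb{N}$, be the eigenvalues of $-\bar{\mathcal{L}}$ (in increasing order) and $e_k$ corresponding eigenfunctions, and set $(f_k^{(1)},f_k^{(2)},f_k^{(3)},f_k^{(4)})=(\sin kt,\cos kt,e^{-kt},e^{-k(\pi-t)})$. Then: (a) $\lambda_k=k^4+\mathcal{O}(k^2)$ as $k\to\infty$; (b) the eigenfunctions can be chosen so that there exist functions $g_k^{(i)}$ with $e_k(t)=\sin(kt)+\frac1k\sum_{i=1}^4g_k^{(i)}(t)f_k^{(i)}(t)$ for all $t\in[0,\pi]$, and $\sup_{i=1,\dots,4}\sup_{k\in\mathbb{N}}\|g_k^{(i)}\|_{\mathrm{C}^j}<\infty$ for every $j\ge0$.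
   Context: $\|\cdot\|_{\mathrm{C}^j}$ is the norm of $j$ times continuously differentiable functions on $[0,\pi]$. *)

theory Defs
  imports "HOL-Analysis.Analysis" "HOL-Library.Landau_Symbols"
begin

text \<open>Eigenfunctions of this constant-coefficient
  ODE in H^4 are smooth, so we state it classically: x is C^4 on [0,pi]
  (one-sided derivatives at the end points) and satisfies -Lbar x = mu x.\<close>
definition in_eigenspace :: "real \<Rightarrow> real \<Rightarrow> real \<Rightarrow> (real \<Rightarrow> real) \<Rightarrow> bool" where
  "in_eigenspace T \<gamma> mu x \<longleftrightarrow>
     (\<exists>x1 x2 x3 x4 :: real \<Rightarrow> real.
        (\<forall>t\<in>{0..pi}. (x has_real_derivative x1 t) (at t within {0..pi})) \<and>
        (\<forall>t\<in>{0..pi}. (x1 has_real_derivative x2 t) (at t within {0..pi})) \<and>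
        (\<forall>t\<in>{0..pi}. (x2 has_real_derivative x3 t) (at t within {0..pi})) \<and>
        (\<forall>t\<in>{0..pi}. (x3 has_real_derivative x4 t) (at t within {0..pi})) \<and>
        continuous_on {0..pi} x4 \<and>
        (\<forall>t\<in>{0..pi}. x4 t - \<gamma>\<^sup>2 * x2 t = mu * x t) \<and>
        x 0 = 0 \<and> x pi = 0 \<and>
        T / (pi * \<gamma>) * x2 0 = x1 0 \<and>
        T / (pi * \<gamma>) * x2 pi = - x1 pi)"

text \<open>An eigenfunction: a nonzero element of the eigenspace (nonzero as an element of
  L^2; for continuous functions this means nonzero somewhere on [0,pi]).\<close>
definition is_eigenfunction :: "real \<Rightarrow> real \<Rightarrow> real \<Rightarrow> (real \<Rightarrow> real) \<Rightarrow> bool" where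
  "is_eigenfunction T \<gamma> mu x \<longleftrightarrow> in_eigenspace T \<gamma> mu x \<and> (\<exists>t\<in>{0..pi}. x t \<noteq> 0)"

definition lin_indep_on :: "real set \<Rightarrow> (real \<Rightarrow> real) set \<Rightarrow> bool" where
  "lin_indep_on S F \<longleftrightarrow>
     (\<forall>c :: (real \<Rightarrow> real) \<Rightarrow> real.
        (\<forall>t\<in>S. (\<Sum>f\<in>F. c f * f t) = 0) \<longrightarrow> (\<forall>f\<in>F. c f = 0))"

text \<open>(Geometric = algebraic, the operator being self-adjoint) multiplicity of mu:
  the dimension of the eigenspace.  It is 0 iff mu is not an eigenvalue.\<close>
definition eig_mult :: "real \<Rightarrow> real \<Rightarrow> real \<Rightarrow> nat" where
  "eig_mult T \<gamma> mu = Sup {card F | F. finite F \<and> (\<forall>x\<in>F. in_eigenspace T \<gamma> mu x)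
                                        \<and> lin_indep_on {0..pi} F}"

text \<open>C^j regularity on [0,pi] together with a bound on the C^j norm
  (max over l \<le> j of the sup norm of the l-th derivative; equivalent to the
  sum-norm up to the factor j+1).\<close>
definition Cj_norm_le :: "nat \<Rightarrow> (real \<Rightarrow> real) \<Rightarrow> real \<Rightarrow> bool" where
  "Cj_norm_le j g B \<longleftrightarrow>
     (\<exists>D :: nat \<Rightarrow> real \<Rightarrow> real.
        (\<forall>t\<in>{0..pi}. D 0 t = g t) \<and>
        (\<forall>l<j. \<forall>t\<in>{0..pi}. (D l has_real_derivative D (Suc l) t) (at t within {0..pi})) \<and>
        (\<forall>l\<le>j. continuous_on {0..pi} (D l)) \<and>
        (\<forall>l\<le>j. \<forall>t\<in>{0..pi}. \<bar>D l t\<bar> \<le> B))"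

definition fbasis :: "nat \<Rightarrow> nat \<Rightarrow> real \<Rightarrow> real" where
  "fbasis i k t =
     (if i = 1 then sin (real k * t)
      else if i = 2 then cos (real k * t)
      else if i = 3 then exp (- real k * t)
      else exp (- real k * (pi - t)))"

end

theory Submission
  imports Defs
begin


abbreviation I0 :: "real set" where "I0 \<equiv> {0..pi}"

lemma deriv_lin_zero:
  fixes f f' :: "real \<Rightarrow> real" and c t0 :: real
  assumes d: "\<And>t. t \<in> I0 \<Longrightarrow> (f has_real_derivative c * f t) (at t within I0)"
    and t0: "t0 \<in> I0" and z: "f t0 = 0" and t: "t \<in> I0"
  shows "f t = 0"
proof -
  have "\<exists>K. \<forall>x\<in>I0. f x * exp (- c * x) = K"
  proof (rule has_field_derivative_zero_constant)
    show "convex I0" by simp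
    fix x assume x: "x \<in> I0"
    have "((\<lambda>x. f x * exp (- c * x)) has_real_derivative
          (c * f x) * exp (- c * x) + f x * (exp (- c * x) * (- c * 1))) (at x within I0)"
      by (rule derivative_eq_intros d[OF x] refl | simp)+
    then show "((\<lambda>x. f x * exp (- c * x)) has_real_derivative 0) (at x within I0)"
      by (simp add: algebra_simps)
  qed
  then obtain K where K: "\<And>x. x \<in> I0 \<Longrightarrow> f x * exp (- c * x) = K" by blast
  have "K = 0" using K[OF t0] z by simp
  then show ?thesis using K[OF t] by simp
qed

lemma energy_zero:
  fixes w w1 w2 :: "real \<Rightarrow> real" and om t0 :: real
  assumes d0: "\<And>t. t \<in> I0 \<Longrightarrow> (w has_real_derivative w1 t) (at t within I0)"
    and d1: "\<And>t. t \<in> I0 \<Longrightarrow> (w1 has_real_derivative w2 t) (at t within I0)"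
    and eq: "\<And>t. t \<in> I0 \<Longrightarrow> w2 t = - (om\<^sup>2 * w t)"
    and om: "om > 0"
    and t0: "t0 \<in> I0" and z0: "w t0 = 0" and z1: "w1 t0 = 0" and t: "t \<in> I0"
  shows "w t = 0 \<and> w1 t = 0"
proof -
  have "\<exists>K. \<forall>x\<in>I0. (w1 x)\<^sup>2 + om\<^sup>2 * (w x)\<^sup>2 = K"
  proof (rule has_field_derivative_zero_constant)
    show "convex I0" by simp
    fix x assume x: "x \<in> I0"
    have "((\<lambda>x. (w1 x)\<^sup>2 + om\<^sup>2 * (w x)\<^sup>2) has_real_derivative
          2 * w1 x * w2 x + om\<^sup>2 * (2 * w x * w1 x)) (at x within I0)"
      by (rule derivative_eq_intros d0[OF x] d1[OF x] refl | simp)+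
    then show "((\<lambda>x. (w1 x)\<^sup>2 + om\<^sup>2 * (w x)\<^sup>2) has_real_derivative 0) (at x within I0)"
      using eq[OF x] by (simp add: algebra_simps)
  qed
  then obtain K where K: "\<And>x. x \<in> I0 \<Longrightarrow> (w1 x)\<^sup>2 + om\<^sup>2 * (w x)\<^sup>2 = K" by blast
  have "K = 0" using K[OF t0] z0 z1 by simp
  then have e: "(w1 t)\<^sup>2 + om\<^sup>2 * (w t)\<^sup>2 = 0" using K[OF t] by simp
  have "om\<^sup>2 * (w t)\<^sup>2 \<ge> 0" by simp
  moreover have "(w1 t)\<^sup>2 \<ge> 0" by simp
  ultimately have "(w1 t)\<^sup>2 = 0" "om\<^sup>2 * (w t)\<^sup>2 = 0" using e by linarith+
  then show ?thesis using om by simp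
qed



definition phi0 :: "real \<Rightarrow> real \<Rightarrow> real \<Rightarrow> real \<Rightarrow> real \<Rightarrow> real \<Rightarrow> real \<Rightarrow> real" where
  "phi0 om p A B C D t = A * cos (om * (t - pi/2)) + B * sin (om * (t - pi/2))
      + C * cosh (p * (t - pi/2)) + D * sinh (p * (t - pi/2))"
definition phi1 :: "real \<Rightarrow> real \<Rightarrow> real \<Rightarrow> real \<Rightarrow> real \<Rightarrow> real \<Rightarrow> real \<Rightarrow> real" where
  "phi1 om p A B C D t = - A * om * sin (om * (t - pi/2)) + B * om * cos (om * (t - pi/2))
      + C * p * sinh (p * (t - pi/2)) + D * p * cosh (p * (t - pi/2))"
definition phi2 :: "real \<Rightarrow> real \<Rightarrow> real \<Rightarrow> real \<Rightarrow> real \<Rightarrow> real \<Rightarrow> real \<Rightarrow> real" where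
  "phi2 om p A B C D t = - A * om^2 * cos (om * (t - pi/2)) - B * om^2 * sin (om * (t - pi/2))
      + C * p^2 * cosh (p * (t - pi/2)) + D * p^2 * sinh (p * (t - pi/2))"
definition phi3 :: "real \<Rightarrow> real \<Rightarrow> real \<Rightarrow> real \<Rightarrow> real \<Rightarrow> real \<Rightarrow> real \<Rightarrow> real" where
  "phi3 om p A B C D t = A * om^3 * sin (om * (t - pi/2)) - B * om^3 * cos (om * (t - pi/2))
      + C * p^3 * sinh (p * (t - pi/2)) + D * p^3 * cosh (p * (t - pi/2))"
definition phi4 :: "real \<Rightarrow> real \<Rightarrow> real \<Rightarrow> real \<Rightarrow> real \<Rightarrow> real \<Rightarrow> real \<Rightarrow> real" where
  "phi4 om p A B C D t = A * om^4 * cos (om * (t - pi/2)) + B * om^4 * sin (om * (t - pi/2))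
      + C * p^4 * cosh (p * (t - pi/2)) + D * p^4 * sinh (p * (t - pi/2))"

lemma phi0_deriv: "(phi0 om p A B C D has_real_derivative phi1 om p A B C D t) (at t within S)"
  unfolding phi0_def[abs_def] phi1_def
  by (rule derivative_eq_intros refl | simp add: algebra_simps)+

lemma phi1_deriv: "(phi1 om p A B C D has_real_derivative phi2 om p A B C D t) (at t within S)"
  unfolding phi1_def[abs_def] phi2_def
  by (rule derivative_eq_intros refl | simp add: algebra_simps power2_eq_square)+

lemma phi2_deriv: "(phi2 om p A B C D has_real_derivative phi3 om p A B C D t) (at t within S)"
  unfolding phi2_def[abs_def] phi3_def
  by (rule derivative_eq_intros refl | simp add: algebra_simps power2_eq_square power3_eq_cube)+

lemma phi3_deriv: "(phi3 om p A B C D has_real_derivative phi4 om p A B C D t) (at t within S)"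
  unfolding phi3_def[abs_def] phi4_def
  by (rule derivative_eq_intros refl | simp add: algebra_simps power3_eq_cube power4_eq_xxxx)+

lemma phi_ode:
  assumes "p^2 = om^2 + g^2"
  shows "phi4 om p A B C D t - g^2 * phi2 om p A B C D t = om^2 * p^2 * phi0 om p A B C D t"
proof -
  have g2: "g^2 = p^2 - om^2" using assms by simp
  show ?thesis unfolding phi4_def phi2_def phi0_def g2
    by (simp add: algebra_simps power2_eq_square power4_eq_xxxx)
qed



lemma phi_at_mid:
  "phi0 om p A B C D (pi/2) = A + C"
  "phi1 om p A B C D (pi/2) = om * B + p * D"
  "phi2 om p A B C D (pi/2) = p^2 * C - om^2 * A"
  "phi3 om p A B C D (pi/2) = p^3 * D - om^3 * B"
  by (simp_all add: phi0_def phi1_def phi2_def phi3_def algebra_simps)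

lemma ode_rep:
  fixes x x1 x2 x3 x4 :: "real \<Rightarrow> real"
  assumes om: "om > 0" and p: "p > 0" and pe: "p^2 = om^2 + g^2"
    and d0: "\<forall>t\<in>I0. (x has_real_derivative x1 t) (at t within I0)"
    and d1: "\<forall>t\<in>I0. (x1 has_real_derivative x2 t) (at t within I0)"
    and d2: "\<forall>t\<in>I0. (x2 has_real_derivative x3 t) (at t within I0)"
    and d3: "\<forall>t\<in>I0. (x3 has_real_derivative x4 t) (at t within I0)"
    and eq: "\<forall>t\<in>I0. x4 t - g^2 * x2 t = om^2 * p^2 * x t"
  shows "\<exists>A B C D. \<forall>t\<in>I0. x t = phi0 om p A B C D t \<and> x1 t = phi1 om p A B C D t
            \<and> x2 t = phi2 om p A B C D t"
proof -
  define L where "L = pi/2"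
  have L: "L \<in> I0" unfolding L_def using pi_gt_zero by auto
  define S where "S = om^2 + p^2"
  have S: "S > 0" unfolding S_def using om by (intro add_pos_nonneg) auto
  define A where "A = (p^2 * x L - x2 L) / S"
  define C where "C = (om^2 * x L + x2 L) / S"
  define B where "B = (p^2 * x1 L - x3 L) / (om * S)"
  define D where "D = (om^2 * x1 L + x3 L) / (p * S)"
  define v where "v t = x t - phi0 om p A B C D t" for t
  define v1 where "v1 t = x1 t - phi1 om p A B C D t" for t
  define v2 where "v2 t = x2 t - phi2 om p A B C D t" for t
  define v3 where "v3 t = x3 t - phi3 om p A B C D t" for t
  define v4 where "v4 t = x4 t - phi4 om p A B C D t" for t
  have e0: "v L = 0" unfolding v_def L_def[symmetric] phi_at_mid(1)[of om p A B C D, folded L_def]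
    unfolding A_def C_def using S by (simp add: field_simps; simp add: S_def algebra_simps)
  have e1: "v1 L = 0" unfolding v1_def phi_at_mid(2)[of om p A B C D, folded L_def]
    unfolding B_def D_def using S om p by (simp add: field_simps; simp add: S_def algebra_simps)
  have e2: "v2 L = 0" unfolding v2_def phi_at_mid(3)[of om p A B C D, folded L_def]
    unfolding A_def C_def using S by (simp add: field_simps; simp add: S_def algebra_simps power2_eq_square)
  have e3: "v3 L = 0" unfolding v3_def phi_at_mid(4)[of om p A B C D, folded L_def]
    unfolding B_def D_def using S om p by (simp add: field_simps; simp add: S_def algebra_simps power2_eq_square power3_eq_cube)
  have dv0: "(v has_real_derivative v1 t) (at t within I0)" if "t \<in> I0" for t
    unfolding v_def[abs_def] v1_def using d0 that by (intro derivative_intros phi0_deriv) auto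
  have dv1: "(v1 has_real_derivative v2 t) (at t within I0)" if "t \<in> I0" for t
    unfolding v1_def[abs_def] v2_def using d1 that by (intro derivative_intros phi1_deriv) auto
  have dv2: "(v2 has_real_derivative v3 t) (at t within I0)" if "t \<in> I0" for t
    unfolding v2_def[abs_def] v3_def using d2 that by (intro derivative_intros phi2_deriv) auto
  have dv3: "(v3 has_real_derivative v4 t) (at t within I0)" if "t \<in> I0" for t
    unfolding v3_def[abs_def] v4_def using d3 that by (intro derivative_intros phi3_deriv) auto
  have veq: "v4 t - g^2 * v2 t = om^2 * p^2 * v t" if "t \<in> I0" for t
    using eq that phi_ode[OF pe, of A B C D t] unfolding v4_def v2_def v_def
    by (simp add: algebra_simps)
  define y where "y t = v2 t + om^2 * v t" for t
  define y1 where "y1 t = v3 t + om^2 * v1 t" for t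
  define z where "z t = y1 t - p * y t" for t
  have dy: "(y has_real_derivative y1 t) (at t within I0)" if "t \<in> I0" for t
    unfolding y_def[abs_def] y1_def using dv2[OF that] dv0[OF that]
    by (intro derivative_intros DERIV_cmult) auto
  have dy1: "(y1 has_real_derivative p^2 * y t) (at t within I0)" if "t \<in> I0" for t
  proof -
    have "(y1 has_real_derivative v4 t + om^2 * v2 t) (at t within I0)"
      unfolding y1_def[abs_def] using dv3[OF that] dv1[OF that]
      by (intro derivative_intros DERIV_cmult) auto
    moreover have "v4 t + om^2 * v2 t = p^2 * y t"
      using veq[OF that] pe unfolding y_def by (simp add: algebra_simps)
    ultimately show ?thesis by simp
  qed
  have dz: "(z has_real_derivative (- p) * z t) (at t within I0)" if "t \<in> I0" for t
  proof -
    have "(z has_real_derivative p^2 * y t - p * y1 t) (at t within I0)"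
      unfolding z_def[abs_def] using dy1[OF that] dy[OF that]
      by (intro derivative_intros DERIV_cmult) auto
    then show ?thesis unfolding z_def by (simp add: algebra_simps power2_eq_square)
  qed
  have zL: "z L = 0" unfolding z_def y1_def y_def using e0 e1 e2 e3 by simp
  have z0: "z t = 0" if "t \<in> I0" for t
    by (rule deriv_lin_zero[OF dz L zL that])
  have dy': "(y has_real_derivative p * y t) (at t within I0)" if "t \<in> I0" for t
    using dy[OF that] z0[OF that] unfolding z_def by simp
  have yL: "y L = 0" unfolding y_def using e0 e2 by simp
  have y0: "y t = 0" if "t \<in> I0" for t
    by (rule deriv_lin_zero[OF dy' L yL that])
  have v2e: "v2 t = - (om^2 * v t)" if "t \<in> I0" for t
    using y0[OF that] unfolding y_def by simp
  have vz: "v t = 0 \<and> v1 t = 0" if "t \<in> I0" for t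
    by (rule energy_zero[OF dv0 dv1 v2e om L e0 e1 that])
  show ?thesis
  proof (intro exI ballI conjI)
    fix t assume t: "t \<in> I0"
    show "x t = phi0 om p A B C D t" using vz[OF t] unfolding v_def by simp
    show "x1 t = phi1 om p A B C D t" using vz[OF t] unfolding v1_def by simp
    show "x2 t = phi2 om p A B C D t" using vz[OF t] v2e[OF t] unfolding v2_def v_def by simp
  qed
qed



lemma phi_ends:
  fixes om p A B C D :: real
  defines "c \<equiv> cos (om * (pi/2))" and "sn \<equiv> sin (om * (pi/2))"
    and "ch \<equiv> cosh (p * (pi/2))" and "sh \<equiv> sinh (p * (pi/2))"
  shows "phi0 om p A B C D pi = A * c + B * sn + C * ch + D * sh"
    "phi0 om p A B C D 0 = A * c - B * sn + C * ch - D * sh"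
    "phi1 om p A B C D pi = - A * om * sn + B * om * c + C * p * sh + D * p * ch"
    "phi1 om p A B C D 0 = A * om * sn + B * om * c - C * p * sh + D * p * ch"
    "phi2 om p A B C D pi = - A * om^2 * c - B * om^2 * sn + C * p^2 * ch + D * p^2 * sh"
    "phi2 om p A B C D 0 = - A * om^2 * c + B * om^2 * sn + C * p^2 * ch - D * p^2 * sh"
  by (simp_all add: phi0_def phi1_def phi2_def c_def sn_def ch_def sh_def)

lemma phi_bc:
  fixes om p A B C D m :: real
  defines "c \<equiv> cos (om * (pi/2))" and "sn \<equiv> sin (om * (pi/2))"
    and "ch \<equiv> cosh (p * (pi/2))" and "sh \<equiv> sinh (p * (pi/2))"
  shows "(phi0 om p A B C D 0 = 0 \<and> phi0 om p A B C D pi = 0 \<and>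
          m * phi2 om p A B C D 0 = phi1 om p A B C D 0 \<and>
          m * phi2 om p A B C D pi = - phi1 om p A B C D pi) \<longleftrightarrow>
         (A * c + C * ch = 0 \<and> B * sn + D * sh = 0 \<and>
          A * (m * om^2 * c + om * sn) = C * (m * p^2 * ch + p * sh) \<and>
          B * (om * c - m * om^2 * sn) + D * (m * p^2 * sh + p * ch) = 0)"
  unfolding phi_ends c_def[symmetric] sn_def[symmetric] ch_def[symmetric] sh_def[symmetric]
  by (auto simp: algebra_simps)



lemma sinh_ge_self: fixes x :: real assumes "0 \<le> x" shows "x \<le> sinh x"
  using real_le_x_sinh[OF assms] by (simp add: sinh_field_def exp_minus)

lemma sinh_le_x_cosh: fixes z :: real assumes "0 \<le> z" shows "sinh z \<le> z * cosh z"
proof -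
  have "(\<lambda>z. z * cosh z - sinh z) 0 \<le> (\<lambda>z. z * cosh z - sinh z) z"
  proof (rule DERIV_nonneg_imp_nondecreasing[OF assms])
    fix x :: real assume x: "0 \<le> x" "x \<le> z"
    have "((\<lambda>z. z * cosh z - sinh z) has_real_derivative x * sinh x) (at x)"
      by (rule derivative_eq_intros refl | simp)+
    moreover have "x * sinh x \<ge> 0" using x by simp
    ultimately show "\<exists>y. ((\<lambda>z. z * cosh z - sinh z) has_real_derivative y) (at x) \<and> 0 \<le> y" by blast
  qed
  then show ?thesis by simp
qed

lemma coth_mono:
  fixes y1 y2 L :: real
  assumes L: "L > 0" and y1: "0 < y1" and y12: "y1 \<le> y2"
  shows "y1 * cosh (y1 * L) / sinh (y1 * L) \<le> y2 * cosh (y2 * L) / sinh (y2 * L)"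
proof -
  let ?f = "\<lambda>y. y * cosh (y * L) / sinh (y * L)"
  have "?f y1 \<le> ?f y2"
  proof (rule DERIV_nonneg_imp_nondecreasing[OF y12])
    fix x :: real assume x: "y1 \<le> x" "x \<le> y2"
    have xp: "x > 0" using x y1 by simp
    have sp: "sinh (x * L) > 0" using xp L by simp
    have "(?f has_real_derivative
        ((cosh (x * L) + x * (sinh (x * L) * L)) * sinh (x * L) - x * cosh (x * L) * (cosh (x * L) * L))
          / (sinh (x * L) * sinh (x * L))) (at x)"
      using sp by (auto intro!: derivative_eq_intros)
    moreover have "((cosh (x * L) + x * (sinh (x * L) * L)) * sinh (x * L) - x * cosh (x * L) * (cosh (x * L) * L))
          / (sinh (x * L) * sinh (x * L)) \<ge> 0"
    proof -
      have e: "(cosh (x * L) + x * (sinh (x * L) * L)) * sinh (x * L) - x * cosh (x * L) * (cosh (x * L) * L)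
          = cosh (x * L) * sinh (x * L) - x * L * ((cosh (x * L))^2 - (sinh (x * L))^2)"
        by (simp add: algebra_simps power2_eq_square)
      have "(cosh (x * L))^2 - (sinh (x * L))^2 = 1" by (simp add: cosh_square_eq)
      moreover have "x * L \<le> sinh (x * L)" using xp L by (intro sinh_ge_self) simp
      moreover have "sinh (x * L) \<le> cosh (x * L) * sinh (x * L)"
        using sp cosh_real_ge_1[of "x * L"] by (simp add: mult_le_cancel_right1)
      ultimately have "(cosh (x * L) + x * (sinh (x * L) * L)) * sinh (x * L) - x * cosh (x * L) * (cosh (x * L) * L) \<ge> 0"
        unfolding e by simp
      then show ?thesis by simp
    qed
    ultimately show "\<exists>y. (?f has_real_derivative y) (at x) \<and> 0 \<le> y" by blast
  qed
  then show ?thesis by simp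
qed



definition psi :: "(real \<Rightarrow> real) \<Rightarrow> real \<Rightarrow> real" where
  "psi N w = w * (pi/2) - arctan (w / N w)"

lemma psi_bounds:
  assumes "w > 0" "N w > 0"
  shows "(w - 1) * (pi/2) < psi N w" "psi N w < w * (pi/2)"
proof -
  have "w / N w > 0" using assms by simp
  then have "0 < arctan (w / N w)" "arctan (w / N w) < pi/2"
    using arctan_ubound by (auto simp: arctan_less_zero_iff)
  moreover have "(w - 1) * (pi/2) = w * (pi/2) - pi/2" by (simp add: field_simps)
  ultimately show "(w - 1) * (pi/2) < psi N w" "psi N w < w * (pi/2)"
    unfolding psi_def by linarith+
qed

lemma arctan_line_mono:
  fixes c w1 w2 :: real
  assumes c: "c > 0" and w1: "1 \<le> w1" and w12: "w1 < w2"
  shows "w1 * (pi/2) - arctan (w1 / c) < w2 * (pi/2) - arctan (w2 / c)"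
proof -
  let ?h = "\<lambda>w. w * (pi/2) - arctan (w / c)"
  have "?h w1 < ?h w2"
  proof (rule DERIV_pos_imp_increasing[OF w12])
    fix x :: real assume x: "w1 \<le> x" "x \<le> w2"
    have cne: "c \<noteq> 0" using c by simp
    have "(?h has_real_derivative pi/2 - (1 / c) / (1 + (x / c)^2)) (at x)"
      by (rule derivative_eq_intros refl | simp add: cne)+ (simp add: field_simps)
    moreover have "(1 / c) / (1 + (x / c)^2) < pi/2"
    proof -
      have x1: "x \<ge> 1" using x w1 by simp
      have "(1 / c) / (1 + (x / c)^2) = c / (c^2 + x^2)"
        using c by (simp add: field_simps power2_eq_square)
      also have "\<dots> \<le> 1 / 2"
      proof -
        have "0 \<le> (c - x)^2" by simp
        then have "2 * c * x \<le> c^2 + x^2" by (simp add: power2_eq_square algebra_simps)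
        then have "2 * c \<le> c^2 + x^2" using x1 c by (smt (verit) mult_le_cancel_left1)
        moreover have "c^2 + x^2 > 0" using c by (simp add: add_pos_nonneg)
        ultimately show ?thesis by (simp add: field_simps)
      qed
      also have "\<dots> < pi/2" using pi_gt3 by simp
      finally show ?thesis .
    qed
    ultimately show "\<exists>y. (?h has_real_derivative y) (at x) \<and> 0 < y"
      by (intro exI[of _ "pi/2 - (1 / c) / (1 + (x / c)^2)"]) simp
  qed
  then show ?thesis by simp
qed

lemma psi_strict_mono:
  assumes pos: "\<And>w. w > 0 \<Longrightarrow> N w > 0"
    and mono: "\<And>a b. 0 < a \<Longrightarrow> a \<le> b \<Longrightarrow> N a \<le> N b"
    and w1: "1 \<le> w1" and w12: "w1 < w2"
  shows "psi N w1 < psi N w2"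
proof -
  have N1: "N w1 > 0" using pos w1 by simp
  have "N w1 \<le> N w2" using mono w1 w12 by simp
  then have "w2 / N w2 \<le> w2 / N w1" using N1 w1 w12
    by (intro divide_left_mono) auto
  then have "arctan (w2 / N w2) \<le> arctan (w2 / N w1)" by (simp add: arctan_le_iff)
  moreover have "w1 * (pi/2) - arctan (w1 / N w1) < w2 * (pi/2) - arctan (w2 / N w1)"
    by (rule arctan_line_mono[OF N1 w1 w12])
  ultimately show ?thesis unfolding psi_def by simp
qed

lemma psi_root_exists:
  fixes k :: nat
  assumes pos: "\<And>w. w > 0 \<Longrightarrow> N w > 0"
    and cont: "\<And>a b. 0 < a \<Longrightarrow> continuous_on {a..b} N"
    and k: "k \<ge> 1"
  shows "\<exists>w. real k < w \<and> w < real k + 1 \<and> psi N w = real k * (pi/2)"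
proof -
  have kp: "real k > 0" using k by simp
  have nz: "\<forall>x\<in>{real k..real k + 1}. N x \<noteq> 0"
  proof
    fix x assume "x \<in> {real k..real k + 1}"
    then have "x > 0" using kp by simp
    then show "N x \<noteq> 0" using pos by (metis less_irrefl)
  qed
  have c: "continuous_on {real k..real k + 1} (psi N)"
    unfolding psi_def
    using cont[OF kp, of "real k + 1"] nz
    by (intro continuous_intros) auto
  have a: "psi N (real k) \<le> real k * (pi/2)" using psi_bounds[of "real k" N] kp pos[OF kp] by simp
  have b: "real k * (pi/2) \<le> psi N (real k + 1)" using psi_bounds[of "real k + 1" N] kp pos[of "real k + 1"] by simp
  obtain w where w: "real k \<le> w" "w \<le> real k + 1" "psi N w = real k * (pi/2)"
    using IVT'[of "psi N" "real k" "real k * (pi/2)" "real k + 1", OF a b _ c] by auto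
  have wp: "w > 0" using w kp by simp
  have "w \<noteq> real k" using psi_bounds(2)[of w N, OF wp pos[OF wp]] w by auto
  moreover have "w \<noteq> real k + 1" using psi_bounds(1)[of w N, OF wp pos[OF wp]] w by auto
  ultimately have "real k < w" "w < real k + 1" using w by auto
  then show ?thesis using w(3) by blast
qed

lemma psi_root_in:
  assumes "w > 0" "N w > 0" "psi N w = real k * (pi/2)"
  shows "real k < w" "w < real k + 1"
proof -
  have a: "(w - 1) * (pi/2) < real k * (pi/2)" "real k * (pi/2) < w * (pi/2)"
    using psi_bounds[of w N, OF assms(1) assms(2)] assms(3) by simp_all
  have pp: "pi/2 > 0" by simp
  show "real k < w" using a(2) pp by (simp add: mult_less_cancel_right)
  show "w < real k + 1" using a(1) pp by (simp add: mult_less_cancel_right)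
qed



definition pp :: "real \<Rightarrow> real \<Rightarrow> real" where "pp g w = sqrt (w^2 + g^2)"
definition Ne :: "real \<Rightarrow> real \<Rightarrow> real \<Rightarrow> real" where
  "Ne m g w = m * (w^2 + (pp g w)^2) + pp g w * tanh (pp g w * (pi/2))"
definition No :: "real \<Rightarrow> real \<Rightarrow> real \<Rightarrow> real" where
  "No m g w = m * (w^2 + (pp g w)^2) + pp g w * cosh (pp g w * (pi/2)) / sinh (pp g w * (pi/2))"
definition NN :: "real \<Rightarrow> real \<Rightarrow> nat \<Rightarrow> real \<Rightarrow> real" where
  "NN m g k = (if odd k then Ne m g else No m g)"
definition omk :: "real \<Rightarrow> real \<Rightarrow> nat \<Rightarrow> real" where
  "omk m g k = (THE w. real k < w \<and> w < real k + 1 \<and> psi (NN m g k) w = real k * (pi/2))"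

lemma pp_facts:
  assumes g: "g > 0"
  shows "pp g w > 0" "(pp g w)^2 = w^2 + g^2" "w \<le> pp g w" "pp g w \<le> \<bar>w\<bar> + g"
proof -
  have s: "w^2 + g^2 > 0" using g by (simp add: add_nonneg_pos)
  show "pp g w > 0" unfolding pp_def using s by simp
  show "(pp g w)^2 = w^2 + g^2" unfolding pp_def using s by simp
  show "w \<le> pp g w" unfolding pp_def by (simp add: real_le_rsqrt)
  have "w^2 + g^2 \<le> (\<bar>w\<bar> + g)^2" using g by (simp add: power2_eq_square algebra_simps)
  then have "sqrt (w^2 + g^2) \<le> sqrt ((\<bar>w\<bar> + g)^2)" by (rule real_sqrt_le_mono)
  then show "pp g w \<le> \<bar>w\<bar> + g" unfolding pp_def using g by simp
qed

lemma pp_mono: assumes "0 \<le> a" "a \<le> b" shows "pp g a \<le> pp g b"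
  unfolding pp_def using assms by (intro real_sqrt_le_mono) (simp add: power_mono)

lemma Ne_ge:
  assumes m: "m > 0" and g: "g > 0" and w: "w > 0"
  shows "Ne m g w \<ge> m * (w^2 + (pp g w)^2)" "Ne m g w > 0"
proof -
  have "pp g w * tanh (pp g w * (pi/2)) \<ge> 0" using pp_facts(1)[OF g, of w] by simp
  then show "Ne m g w \<ge> m * (w^2 + (pp g w)^2)" unfolding Ne_def by simp
  moreover have "m * (w^2 + (pp g w)^2) > 0" using m w by (simp add: add_pos_nonneg)
  ultimately show "Ne m g w > 0" by simp
qed

lemma No_ge:
  assumes m: "m > 0" and g: "g > 0" and w: "w > 0"
  shows "No m g w \<ge> m * (w^2 + (pp g w)^2)" "No m g w > 0" "No m g w * (pi/2) > 1"
proof -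
  have pp: "pp g w > 0" using pp_facts(1)[OF g] by simp
  have z: "pp g w * (pi/2) > 0" using pp by simp
  have h: "pp g w * cosh (pp g w * (pi/2)) / sinh (pp g w * (pi/2)) * (pi/2) \<ge> 1"
  proof -
    have "sinh (pp g w * (pi/2)) \<le> pp g w * (pi/2) * cosh (pp g w * (pi/2))"
      using z by (intro sinh_le_x_cosh) simp
    moreover have "sinh (pp g w * (pi/2)) > 0" using z by simp
    ultimately show ?thesis by (simp add: field_simps)
  qed
  have "pp g w * cosh (pp g w * (pi/2)) / sinh (pp g w * (pi/2)) \<ge> 0"
    using pp z by (simp add: less_imp_le)
  then show "No m g w \<ge> m * (w^2 + (pp g w)^2)" unfolding No_def by simp
  moreover have mp: "m * (w^2 + (pp g w)^2) > 0" using m w by (simp add: add_pos_nonneg)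
  ultimately show "No m g w > 0" by simp
  show "No m g w * (pi/2) > 1"
  proof -
    have e: "No m g w * (pi/2) = m * (w^2 + (pp g w)^2) * (pi/2) + pp g w * cosh (pp g w * (pi/2)) / sinh (pp g w * (pi/2)) * (pi/2)"
      unfolding No_def by (simp add: distrib_right)
    have "m * (w^2 + (pp g w)^2) * (pi/2) > 0" using mp by simp
    then show ?thesis using e h by linarith
  qed
qed

lemma Ne_mono:
  assumes m: "m > 0" and g: "g > 0" and a: "0 < a" and ab: "a \<le> b"
  shows "Ne m g a \<le> Ne m g b"
proof -
  have p: "pp g a \<le> pp g b" using pp_mono a ab by simp
  have pa: "pp g a > 0" using pp_facts(1)[OF g] by simp
  have "m * (a^2 + (pp g a)^2) \<le> m * (b^2 + (pp g b)^2)"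
    using m a ab p pa by (intro mult_left_mono add_mono power_mono) auto
  moreover have "pp g a * tanh (pp g a * (pi/2)) \<le> pp g b * tanh (pp g b * (pi/2))"
    using p pa by (intro mult_mono) (auto simp: less_imp_le)
  ultimately show ?thesis unfolding Ne_def by simp
qed

lemma No_mono:
  assumes m: "m > 0" and g: "g > 0" and a: "0 < a" and ab: "a \<le> b"
  shows "No m g a \<le> No m g b"
proof -
  have p: "pp g a \<le> pp g b" using pp_mono a ab by simp
  have pa: "pp g a > 0" using pp_facts(1)[OF g] by simp
  have "m * (a^2 + (pp g a)^2) \<le> m * (b^2 + (pp g b)^2)"
    using m a ab p pa by (intro mult_left_mono add_mono power_mono) auto
  moreover have "pp g a * cosh (pp g a * (pi/2)) / sinh (pp g a * (pi/2)) \<le> pp g b * cosh (pp g b * (pi/2)) / sinh (pp g b * (pi/2))"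
    using coth_mono[of "pi/2" "pp g a" "pp g b"] p pa by simp
  ultimately show ?thesis unfolding No_def by (simp add: add_mono)
qed

lemma Ne_cont: assumes g: "g > 0" shows "continuous_on S (Ne m g)"
proof -
  have "continuous_on S (pp g)" unfolding pp_def[abs_def] by (intro continuous_intros)
  moreover have "\<forall>x\<in>S. cosh (pp g x * (pi/2)) \<noteq> 0" by (simp add: cosh_real_pos[THEN less_imp_neq, symmetric])
  ultimately have "continuous_on S (\<lambda>w. m * (w^2 + (pp g w)^2) + pp g w * (sinh (pp g w * (pi/2)) / cosh (pp g w * (pi/2))))"
    by (intro continuous_intros continuous_on_divide) auto
  moreover have "(\<lambda>w. m * (w^2 + (pp g w)^2) + pp g w * (sinh (pp g w * (pi/2)) / cosh (pp g w * (pi/2)))) = Ne m g"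
    by (auto simp: Ne_def tanh_def)
  ultimately show ?thesis by metis
qed

lemma No_cont: assumes g: "g > 0" shows "continuous_on S (No m g)"
proof -
  have "continuous_on S (pp g)" unfolding pp_def[abs_def] by (intro continuous_intros)
  moreover have "\<forall>x\<in>S. sinh (pp g x * (pi/2)) \<noteq> 0"
  proof
    fix x have "pp g x > 0" using pp_facts(1)[OF g] by simp
    then show "sinh (pp g x * (pi/2)) \<noteq> 0" by simp
  qed
  ultimately have "continuous_on S (\<lambda>w. m * (w^2 + (pp g w)^2) + pp g w * cosh (pp g w * (pi/2)) / sinh (pp g w * (pi/2)))"
    by (intro continuous_intros continuous_on_divide) auto
  moreover have "(\<lambda>w. m * (w^2 + (pp g w)^2) + pp g w * cosh (pp g w * (pi/2)) / sinh (pp g w * (pi/2))) = No m g"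
    by (auto simp: No_def)
  ultimately show ?thesis by metis
qed

lemma NN_facts:
  assumes m: "m > 0" and g: "g > 0"
  shows "\<And>w. w > 0 \<Longrightarrow> NN m g k w > 0"
    "\<And>a b. 0 < a \<Longrightarrow> a \<le> b \<Longrightarrow> NN m g k a \<le> NN m g k b"
    "\<And>a b. 0 < a \<Longrightarrow> continuous_on {a..b} (NN m g k)"
    "\<And>w. w > 0 \<Longrightarrow> NN m g k w \<ge> m * (w^2 + (pp g w)^2)"
  using Ne_ge[OF m g] No_ge[OF m g] Ne_mono[OF m g] No_mono[OF m g] Ne_cont[OF g] No_cont[OF g]
  unfolding NN_def by auto

lemma omk_spec:
  assumes m: "m > 0" and g: "g > 0" and k: "k \<ge> 1"
  shows "real k < omk m g k \<and> omk m g k < real k + 1 \<and> psi (NN m g k) (omk m g k) = real k * (pi/2)"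
proof -
  note F = NN_facts[OF m g, where k=k]
  obtain w where w: "real k < w \<and> w < real k + 1 \<and> psi (NN m g k) w = real k * (pi/2)"
    using psi_root_exists[of "NN m g k" k, OF F(1) F(3) k] by blast
  show ?thesis unfolding omk_def
  proof (rule theI[of _ w])
    show "real k < w \<and> w < real k + 1 \<and> psi (NN m g k) w = real k * (pi/2)" by (rule w)
    fix y assume y: "real k < y \<and> y < real k + 1 \<and> psi (NN m g k) y = real k * (pi/2)"
    have y1: "1 \<le> y" "1 \<le> w" using y w k by auto
    show "y = w"
    proof (rule ccontr)
      assume "y \<noteq> w"
      then consider "y < w" | "w < y" by linarith
      then show False
      proof cases
        case 1 then show False using psi_strict_mono[of "NN m g k" y w, OF F(1) F(2) y1(1)] y w by auto
      next
        case 2 then show False using psi_strict_mono[of "NN m g k" w y, OF F(1) F(2) y1(2)] y w by auto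
      qed
    qed
  qed
qed

lemma omk_unique:
  assumes m: "m > 0" and g: "g > 0" and k: "k \<ge> 1" and w: "w > 0"
    and r: "psi (NN m g k) w = real k * (pi/2)"
  shows "w = omk m g k"
proof -
  note F = NN_facts[OF m g, where k=k]
  have wi: "real k < w" "w < real k + 1" using psi_root_in[OF w F(1)[OF w] r] by auto
  note o = omk_spec[OF m g k]
  have y1: "1 \<le> w" "1 \<le> omk m g k" using wi o k by auto
  show ?thesis
  proof (rule ccontr)
    assume "w \<noteq> omk m g k"
    then consider "w < omk m g k" | "omk m g k < w" by linarith
    then show False
    proof cases
      case 1 then show False using psi_strict_mono[of "NN m g k", OF F(1) F(2) y1(1) 1] r o by auto
    next
      case 2 then show False using psi_strict_mono[of "NN m g k", OF F(1) F(2) y1(2) 2] r o by auto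
    qed
  qed
qed



definition Ee :: "real \<Rightarrow> real \<Rightarrow> real \<Rightarrow> real" where
  "Ee m g w = cos (w * (pi/2)) * Ne m g w + w * sin (w * (pi/2))"
definition Eo :: "real \<Rightarrow> real \<Rightarrow> real \<Rightarrow> real" where
  "Eo m g w = sin (w * (pi/2)) * No m g w - w * cos (w * (pi/2))"

lemma cos_sin_psi:
  assumes n: "N w > 0"
  shows "cos (psi N w) * N w = cos (arctan (w / N w)) * (cos (w * (pi/2)) * N w + w * sin (w * (pi/2)))"
    "sin (psi N w) * N w = cos (arctan (w / N w)) * (sin (w * (pi/2)) * N w - w * cos (w * (pi/2)))"
proof -
  define a where "a = arctan (w / N w)"
  define C where "C = cos a"
  define c where "c = cos (w * (pi/2))"
  define s where "s = sin (w * (pi/2))"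
  have sa: "sin a = (w / N w) * C"
    unfolding a_def C_def by (simp add: sin_arctan cos_arctan)
  have e1: "cos (psi N w) = c * C + s * sin a" unfolding psi_def a_def[symmetric] C_def c_def s_def
    by (simp add: cos_diff)
  have e2: "sin (psi N w) = s * C - c * sin a" unfolding psi_def a_def[symmetric] C_def c_def s_def
    by (simp add: sin_diff)
  have nz: "N w \<noteq> 0" using n by simp
  show "cos (psi N w) * N w = cos (arctan (w / N w)) * (cos (w * (pi/2)) * N w + w * sin (w * (pi/2)))"
    unfolding e1 sa a_def[symmetric] C_def[symmetric] c_def[symmetric] s_def[symmetric]
    using nz by (simp add: algebra_simps)
  show "sin (psi N w) * N w = cos (arctan (w / N w)) * (sin (w * (pi/2)) * N w - w * cos (w * (pi/2)))"
    unfolding e2 sa a_def[symmetric] C_def[symmetric] c_def[symmetric] s_def[symmetric]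
    using nz by (simp add: algebra_simps)
qed

lemma cos_arctan_pos: "cos (arctan x) > 0"
  by (simp add: cos_arctan add_pos_nonneg)

lemma omk_inj:
  assumes m: "m > 0" and g: "g > 0" and k: "k \<ge> 1" and j: "j \<ge> 1" and e: "omk m g k = omk m g j"
  shows "k = j"
proof -
  have a: "real k < omk m g k" "omk m g k < real k + 1" using omk_spec[OF m g k] by auto
  have b: "real j < omk m g j" "omk m g j < real j + 1" using omk_spec[OF m g j] by auto
  have "real k < real j + 1" "real j < real k + 1" using a b e by linarith+
  then show ?thesis by linarith
qed

lemma Ee_zero_iff:
  assumes m: "m > 0" and g: "g > 0" and w: "w > 0"
  shows "Ee m g w = 0 \<longleftrightarrow> (\<exists>k. k \<ge> 1 \<and> odd k \<and> w = omk m g k)"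
proof
  have N: "Ne m g w > 0" using Ne_ge[OF m g w] by simp
  assume "Ee m g w = 0"
  then have "cos (psi (Ne m g) w) * Ne m g w = 0"
    using cos_sin_psi(1)[of "Ne m g" w, OF N] unfolding Ee_def by simp
  then have "cos (psi (Ne m g) w) = 0" using N by simp
  then obtain i :: int where i: "odd i" "psi (Ne m g) w = of_int i * (pi/2)"
    by (auto simp: cos_zero_iff_int)
  have "(w - 1) * (pi/2) < of_int i * (pi/2)" using psi_bounds(1)[of w "Ne m g", OF w N] i by simp
  then have "w - 1 < of_int i" by (simp add: mult_less_cancel_right)
  then have "of_int i > (-1::real)" using w by linarith
  then have "i > -1" by linarith
  then have i0: "i \<ge> 0" by simp
  define k where "k = nat i"
  have ki: "of_int i = real k" unfolding k_def using i0 by simp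
  have ko: "odd k" unfolding k_def using i(1) i0 by (simp add: even_nat_iff)
  then have k1: "k \<ge> 1" by (cases k) auto
  have "psi (NN m g k) w = real k * (pi/2)" using i(2) ki ko unfolding NN_def by simp
  then have "w = omk m g k" by (rule omk_unique[OF m g k1 w])
  then show "\<exists>k. k \<ge> 1 \<and> odd k \<and> w = omk m g k" using k1 ko by blast
next
  have N: "Ne m g w > 0" using Ne_ge[OF m g w] by simp
  assume "\<exists>k. k \<ge> 1 \<and> odd k \<and> w = omk m g k"
  then obtain k where k: "k \<ge> 1" "odd k" "w = omk m g k" by blast
  have "psi (Ne m g) w = real k * (pi/2)" using omk_spec[OF m g k(1)] k unfolding NN_def by simp
  moreover have "cos (real k * (pi/2)) = 0" unfolding cos_zero_iff_int
  proof (intro exI conjI)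
    show "odd (int k)" using k(2) by simp
    show "real k * (pi/2) = real_of_int (int k) * (pi/2)" by simp
  qed
  ultimately have "cos (psi (Ne m g) w) = 0" by metis
  then show "Ee m g w = 0"
    using cos_sin_psi(1)[of "Ne m g" w, OF N] cos_arctan_pos[of "w / Ne m g w"] unfolding Ee_def by simp
qed

lemma psi_No_pos:
  assumes m: "m > 0" and g: "g > 0" and w: "w > 0"
  shows "psi (No m g) w > 0"
proof -
  have N: "No m g w > 0" "No m g w * (pi/2) > 1" using No_ge[OF m g w] by auto
  have "arctan (w / No m g w) \<le> w / No m g w" using N w by (intro arctan_le_self) simp
  also have "w / No m g w < w * (pi/2)"
  proof -
    have "w * 1 < w * (No m g w * (pi/2))" using N w by (intro mult_strict_left_mono) auto
    then show ?thesis using N by (simp add: pos_divide_less_eq algebra_simps)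
  qed
  finally show ?thesis unfolding psi_def by simp
qed

lemma Eo_zero_iff:
  assumes m: "m > 0" and g: "g > 0" and w: "w > 0"
  shows "Eo m g w = 0 \<longleftrightarrow> (\<exists>k. k \<ge> 1 \<and> even k \<and> w = omk m g k)"
proof
  have N: "No m g w > 0" using No_ge[OF m g w] by simp
  assume "Eo m g w = 0"
  then have "sin (psi (No m g) w) * No m g w = 0"
    using cos_sin_psi(2)[of "No m g" w, OF N] unfolding Eo_def by simp
  then have "sin (psi (No m g) w) = 0" using N by simp
  then obtain i :: int where i: "even i" "psi (No m g) w = of_int i * (pi/2)"
    by (auto simp: sin_zero_iff_int)
  have "0 < of_int i * (pi/2)" using psi_No_pos[OF m g w] i by simp
  then have i0: "i > 0" by (simp add: zero_less_mult_iff)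
  define k where "k = nat i"
  have ki: "of_int i = real k" unfolding k_def using i0 by simp
  have ko: "even k" unfolding k_def using i(1) i0 by (simp add: even_nat_iff)
  have k1: "k \<ge> 1" unfolding k_def using i0 by simp
  have "psi (NN m g k) w = real k * (pi/2)" using i(2) ki ko unfolding NN_def by simp
  then have "w = omk m g k" by (rule omk_unique[OF m g k1 w])
  then show "\<exists>k. k \<ge> 1 \<and> even k \<and> w = omk m g k" using k1 ko by blast
next
  have N: "No m g w > 0" using No_ge[OF m g w] by simp
  assume "\<exists>k. k \<ge> 1 \<and> even k \<and> w = omk m g k"
  then obtain k where k: "k \<ge> 1" "even k" "w = omk m g k" by blast
  have "psi (No m g) w = real k * (pi/2)" using omk_spec[OF m g k(1)] k unfolding NN_def by simp
  moreover have "sin (real k * (pi/2)) = 0" unfolding sin_zero_iff_int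
  proof (intro exI conjI)
    show "even (int k)" using k(2) by simp
    show "real k * (pi/2) = real_of_int (int k) * (pi/2)" by simp
  qed
  ultimately have "sin (psi (No m g) w) = 0" by metis
  then show "Eo m g w = 0"
    using cos_sin_psi(2)[of "No m g" w, OF N] cos_arctan_pos[of "w / No m g w"] unfolding Eo_def by simp
qed



lemma lin_indep_nonzero:
  assumes li: "lin_indep_on I0 F" and f: "f \<in> F" and fin: "finite F"
  shows "\<exists>t\<in>I0. f t \<noteq> 0"
proof (rule ccontr)
  assume "\<not> (\<exists>t\<in>I0. f t \<noteq> 0)"
  then have z: "\<forall>t\<in>I0. f t = 0" by simp
  define c where "c h = (if h = f then (1::real) else 0)" for h :: "real \<Rightarrow> real"
  have "\<forall>t\<in>I0. (\<Sum>h\<in>F. c h * h t) = 0"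
  proof
    fix t assume t: "t \<in> I0"
    have "(\<Sum>h\<in>F. c h * h t) = (\<Sum>h\<in>F. if h = f then f t else 0)"
      unfolding c_def by (intro sum.cong) auto
    also have "\<dots> = f t" using f fin by (simp add: sum.delta')
    finally show "(\<Sum>h\<in>F. c h * h t) = 0" using z t by simp
  qed
  then have "c f = 0" using li f unfolding lin_indep_on_def by blast
  then show False unfolding c_def by simp
qed

lemma eig_mult_zero:
  assumes "\<And>x. in_eigenspace T g mu x \<Longrightarrow> \<forall>t\<in>I0. x t = 0"
  shows "eig_mult T g mu = 0"
proof -
  let ?X = "{card F | F. finite F \<and> (\<forall>x\<in>F. in_eigenspace T g mu x) \<and> lin_indep_on I0 F}"
  have "\<forall>n\<in>?X. n \<le> 0"
  proof
    fix n assume "n \<in> ?X"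
    then obtain F where F: "n = card F" "finite F" "\<forall>x\<in>F. in_eigenspace T g mu x" "lin_indep_on I0 F" by blast
    have "F = {}"
    proof (rule ccontr)
      assume "F \<noteq> {}"
      then obtain f where f: "f \<in> F" by blast
      then show False using lin_indep_nonzero[OF F(4) f F(2)] assms F(3) by blast
    qed
    then show "n \<le> 0" using F by simp
  qed
  moreover have "0 \<in> ?X"
    by (rule CollectI, rule exI[of _ "{}"]) (simp add: lin_indep_on_def)
  ultimately have "Sup ?X = 0" by (intro cSup_eq_maximum) auto
  then show ?thesis unfolding eig_mult_def by simp
qed

lemma eig_mult_one:
  assumes span: "\<And>x. in_eigenspace T g mu x \<Longrightarrow> \<exists>a. \<forall>t\<in>I0. x t = a * e t"
    and ee: "in_eigenspace T g mu e" and nz: "t0 \<in> I0" "e t0 \<noteq> 0"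
  shows "eig_mult T g mu = 1"
proof -
  let ?X = "{card F | F. finite F \<and> (\<forall>x\<in>F. in_eigenspace T g mu x) \<and> lin_indep_on I0 F}"
  have "\<forall>n\<in>?X. n \<le> 1"
  proof
    fix n assume "n \<in> ?X"
    then obtain F where F: "n = card F" "finite F" "\<forall>x\<in>F. in_eigenspace T g mu x" "lin_indep_on I0 F" by blast
    show "n \<le> 1"
    proof (rule ccontr)
      assume "\<not> n \<le> 1"
      then have "card F \<ge> 2" using F by simp
      then obtain f1 f2 where f12: "f1 \<in> F" "f2 \<in> F" "f1 \<noteq> f2"
        using card_le_Suc0_iff_eq[OF F(2)] by fastforce
      obtain a1 where a1: "\<forall>t\<in>I0. f1 t = a1 * e t" using span F(3) f12 by blast
      obtain a2 where a2: "\<forall>t\<in>I0. f2 t = a2 * e t" using span F(3) f12 by blast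
      define c where "c h = (if h = f1 then a2 else if h = f2 then - a1 else 0)" for h :: "real \<Rightarrow> real"
      have "\<forall>t\<in>I0. (\<Sum>h\<in>F. c h * h t) = 0"
      proof
        fix t assume t: "t \<in> I0"
        have "(\<Sum>h\<in>F. c h * h t) = (\<Sum>h\<in>F. (if h = f1 then a2 * f1 t else 0) + (if h = f2 then - a1 * f2 t else 0))"
          unfolding c_def using f12 by (intro sum.cong) auto
        also have "\<dots> = a2 * f1 t - a1 * f2 t" using f12 F(2) by (simp add: sum.distrib sum.delta')
        also have "\<dots> = 0" using a1 a2 t by simp
        finally show "(\<Sum>h\<in>F. c h * h t) = 0" .
      qed
      then have "c f1 = 0" "c f2 = 0" using F(4) f12 unfolding lin_indep_on_def by blast+
      then have "a1 = 0" using f12 unfolding c_def by simp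
      then have "\<forall>t\<in>I0. f1 t = 0" using a1 by simp
      then show False using lin_indep_nonzero[OF F(4) f12(1) F(2)] by blast
    qed
  qed
  moreover have "1 \<in> ?X"
  proof (rule CollectI, rule exI[of _ "{e}"], intro conjI)
    show "lin_indep_on I0 {e}" unfolding lin_indep_on_def using nz by auto
  qed (use ee in auto)
  ultimately have "Sup ?X = 1" by (intro cSup_eq_maximum) auto
  then show ?thesis unfolding eig_mult_def by simp
qed



lemma energy_nonpos:
  assumes g: "g > 0" and m: "m > 0" and Tm: "T / (pi * g) = m"
    and ins: "in_eigenspace T g mu x" and mu: "mu \<le> 0"
  shows "\<forall>t\<in>I0. x t = 0"
proof -
  obtain x1 x2 x3 x4 where
    d0: "\<forall>t\<in>I0. (x has_real_derivative x1 t) (at t within I0)" and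
    d1: "\<forall>t\<in>I0. (x1 has_real_derivative x2 t) (at t within I0)" and
    d2: "\<forall>t\<in>I0. (x2 has_real_derivative x3 t) (at t within I0)" and
    d3: "\<forall>t\<in>I0. (x3 has_real_derivative x4 t) (at t within I0)" and
    eq: "\<forall>t\<in>I0. x4 t - g\<^sup>2 * x2 t = mu * x t" and
    b0: "x 0 = 0" and bpi: "x pi = 0" and
    c0: "T / (pi * g) * x2 0 = x1 0" and cpi: "T / (pi * g) * x2 pi = - x1 pi"
    using ins unfolding in_eigenspace_def by blast
  have c0': "x2 0 = x1 0 / m" using c0 Tm m by (simp add: field_simps)
  have cpi': "x2 pi = - x1 pi / m" using cpi Tm m by (simp add: field_simps)
  define F where "F t = x3 t * x t - x2 t * x1 t - g^2 * x1 t * x t" for t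
  define h where "h t = - (mu * (x t)^2 - (x2 t)^2 - g^2 * (x1 t)^2)" for t
  have dF: "(F has_real_derivative - h t) (at t within I0)" if t: "t \<in> I0" for t
  proof -
    have "(F has_real_derivative
        (x4 t * x t + x3 t * x1 t) - (x3 t * x1 t + x2 t * x2 t) - g^2 * (x2 t * x t + x1 t * x1 t)) (at t within I0)"
      unfolding F_def[abs_def]
      by (rule derivative_eq_intros d0[rule_format, OF t] d1[rule_format, OF t] d2[rule_format, OF t]
          d3[rule_format, OF t] refl | simp add: algebra_simps)+
    moreover have "x4 t = g^2 * x2 t + mu * x t" using eq t by (simp add: algebra_simps)
    ultimately show ?thesis unfolding h_def by (simp add: algebra_simps power2_eq_square)
  qed
  have int: "((\<lambda>t. - h t) has_integral F pi - F 0) I0"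
    using dF pi_gt_zero
    by (intro fundamental_theorem_of_calculus) (auto simp: has_real_derivative_iff_has_vector_derivative[symmetric])
  then have int2: "(h has_integral F 0 - F pi) I0"
    using has_integral_neg[OF int] by simp
  have hnn: "0 \<le> h t" for t
  proof -
    have "mu * (x t)^2 \<le> 0" using mu by (simp add: mult_nonpos_nonneg)
    moreover have "g^2 * (x1 t)^2 \<ge> 0" by simp
    moreover have "(x2 t)^2 \<ge> 0" by simp
    ultimately show ?thesis unfolding h_def by linarith
  qed
  have "0 \<le> F 0 - F pi" by (rule has_integral_nonneg[OF int2 hnn])
  moreover have "F 0 - F pi = - ((x1 0)^2 + (x1 pi)^2) / m"
  proof -
    have "F 0 = - (x1 0 / m) * x1 0" unfolding F_def using b0 c0' by simp
    moreover have "F pi = (x1 pi / m) * x1 pi" unfolding F_def using bpi cpi' by simp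
    ultimately show ?thesis by (simp add: diff_divide_distrib add_divide_distrib power2_eq_square)
  qed
  moreover have "((x1 0)^2 + (x1 pi)^2) / m \<ge> 0" using m by simp
  ultimately have z: "F 0 - F pi = 0" by linarith
  have cx: "continuous_on I0 x" using d0 by (intro DERIV_continuous_on) auto
  have cx1: "continuous_on I0 x1" using d1 by (intro DERIV_continuous_on) auto
  have cx2: "continuous_on I0 x2" using d2 by (intro DERIV_continuous_on) auto
  have ch: "continuous_on I0 h" unfolding h_def[abs_def] using cx cx1 cx2 by (intro continuous_intros)
  have h0: "h t = 0" if t: "t \<in> I0" for t
    using has_integral_0_cbox_imp_0[of 0 pi h t] ch hnn int2 z t pi_gt_zero by auto
  have x10: "x1 t = 0" if t: "t \<in> I0" for t
  proof -
    have "mu * (x t)^2 \<le> 0" using mu by (simp add: mult_nonpos_nonneg)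
    moreover have "(x2 t)^2 \<ge> 0" by simp
    moreover have "g^2 * (x1 t)^2 \<ge> 0" by simp
    ultimately have "g^2 * (x1 t)^2 = 0" using h0[OF t] unfolding h_def by linarith
    then show ?thesis using g by simp
  qed
  obtain K where K: "\<forall>t\<in>I0. x t = K"
    using has_field_derivative_zero_constant[of I0 x] d0 x10 by fastforce
  have "K = 0" using K b0 pi_gt_zero by auto
  then show ?thesis using K by simp
qed



lemma even_sys:
  fixes A C c sn ch sh m w p :: real
  assumes ch: "ch > 0" and C: "C = - A * c / ch"
  shows "A * (m * w^2 * c + w * sn) = C * (m * p^2 * ch + p * sh) \<longleftrightarrow>
         A * (c * (m * (w^2 + p^2) + p * (sh / ch)) + w * sn) = 0"
  using ch unfolding C by (simp add: field_simps) (rule iffI; linarith)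

lemma odd_sys:
  fixes B D c sn ch sh m w p :: real
  assumes sh: "sh > 0" and D: "D = - B * sn / sh"
  shows "B * (w * c - m * w^2 * sn) + D * (m * p^2 * sh + p * ch) = 0 \<longleftrightarrow>
         B * (sn * (m * (w^2 + p^2) + p * ch / sh) - w * c) = 0"
  using sh unfolding D by (simp add: field_simps) (rule iffI; linarith)

lemma lin_solve:
  fixes X a s :: real assumes "s \<noteq> 0" "a + X * s = 0" shows "X = - a / s"
proof -
  have h: "X * s = - a" using assms(2) by linarith
  have "X = X * s / s" by (rule nonzero_mult_div_cancel_right[OF assms(1), symmetric])
  also have "\<dots> = - a / s" by (simp only: h)
  finally show ?thesis .
qed

lemma Ee_unfold: "Ee m g w = cos (w * (pi/2)) * (m * (w^2 + (pp g w)^2) + pp g w * (sinh (pp g w * (pi/2)) / cosh (pp g w * (pi/2)))) + w * sin (w * (pi/2))"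
  unfolding Ee_def Ne_def tanh_def by simp

lemma Eo_unfold: "Eo m g w = sin (w * (pi/2)) * (m * (w^2 + (pp g w)^2) + pp g w * cosh (pp g w * (pi/2)) / sinh (pp g w * (pi/2))) - w * cos (w * (pi/2))"
  unfolding Eo_def No_def by simp

lemma ines_rep:
  assumes g: "g > 0" and m: "m > 0" and Tm: "T / (pi * g) = m" and w: "w > 0"
    and ins: "in_eigenspace T g (w^2 * (pp g w)^2) x"
  shows "\<exists>A B C D. (\<forall>t\<in>I0. x t = phi0 w (pp g w) A B C D t)
     \<and> A * Ee m g w = 0 \<and> C = - A * cos (w * (pi/2)) / cosh (pp g w * (pi/2))
     \<and> B * Eo m g w = 0 \<and> D = - B * sin (w * (pi/2)) / sinh (pp g w * (pi/2))"
proof -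
  let ?p = "pp g w"
  have p: "?p > 0" "?p^2 = w^2 + g^2" using pp_facts[OF g] by auto
  obtain x1 x2 x3 x4 where
    d0: "\<forall>t\<in>I0. (x has_real_derivative x1 t) (at t within I0)" and
    d1: "\<forall>t\<in>I0. (x1 has_real_derivative x2 t) (at t within I0)" and
    d2: "\<forall>t\<in>I0. (x2 has_real_derivative x3 t) (at t within I0)" and
    d3: "\<forall>t\<in>I0. (x3 has_real_derivative x4 t) (at t within I0)" and
    eq: "\<forall>t\<in>I0. x4 t - g\<^sup>2 * x2 t = w^2 * ?p^2 * x t" and
    b0: "x 0 = 0" and bpi: "x pi = 0" and
    c0: "T / (pi * g) * x2 0 = x1 0" and cpi: "T / (pi * g) * x2 pi = - x1 pi"
    using ins unfolding in_eigenspace_def by blast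
  obtain A B C D where r: "\<forall>t\<in>I0. x t = phi0 w ?p A B C D t \<and> x1 t = phi1 w ?p A B C D t
            \<and> x2 t = phi2 w ?p A B C D t"
    using ode_rep[OF w p(1) p(2) d0 d1 d2 d3 eq] by blast
  have z: "0 \<in> I0" "pi \<in> I0" using pi_gt_zero by auto
  have "phi0 w ?p A B C D 0 = 0 \<and> phi0 w ?p A B C D pi = 0 \<and>
          m * phi2 w ?p A B C D 0 = phi1 w ?p A B C D 0 \<and>
          m * phi2 w ?p A B C D pi = - phi1 w ?p A B C D pi"
    using r z b0 bpi c0 cpi Tm by auto
  then have s: "A * cos (w * (pi/2)) + C * cosh (?p * (pi/2)) = 0"
      "B * sin (w * (pi/2)) + D * sinh (?p * (pi/2)) = 0"
      "A * (m * w^2 * cos (w * (pi/2)) + w * sin (w * (pi/2))) = C * (m * ?p^2 * cosh (?p * (pi/2)) + ?p * sinh (?p * (pi/2)))"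
      "B * (w * cos (w * (pi/2)) - m * w^2 * sin (w * (pi/2))) + D * (m * ?p^2 * sinh (?p * (pi/2)) + ?p * cosh (?p * (pi/2))) = 0"
    unfolding phi_bc by auto
  have chp: "cosh (?p * (pi/2)) > 0" by simp
  have shp: "sinh (?p * (pi/2)) > 0" using p by simp
  have C: "C = - A * cos (w * (pi/2)) / cosh (?p * (pi/2))" using lin_solve[OF _ s(1)] chp by simp
  have D: "D = - B * sin (w * (pi/2)) / sinh (?p * (pi/2))" using lin_solve[OF _ s(2)] shp p(1) by simp
  have "A * Ee m g w = 0" using s(3) unfolding even_sys[OF chp C] Ee_unfold by simp
  moreover have "B * Eo m g w = 0" using s(4) unfolding odd_sys[OF shp D] Eo_unfold by simp
  ultimately show ?thesis using r C D by blast
qed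



definition Lam :: "real \<Rightarrow> real \<Rightarrow> real" where "Lam g w = w^2 * (pp g w)^2"
definition Ak :: "nat \<Rightarrow> real" where "Ak k = sin (real k * (pi/2))"
definition Bk :: "nat \<Rightarrow> real" where "Bk k = cos (real k * (pi/2))"
definition Ck :: "real \<Rightarrow> real \<Rightarrow> nat \<Rightarrow> real" where
  "Ck m g k = (if odd k then - Ak k * cos (omk m g k * (pi/2)) / cosh (pp g (omk m g k) * (pi/2)) else 0)"
definition Dk :: "real \<Rightarrow> real \<Rightarrow> nat \<Rightarrow> real" where
  "Dk m g k = (if odd k then 0 else - Bk k * sin (omk m g k * (pi/2)) / sinh (pp g (omk m g k) * (pi/2)))"
definition ef :: "real \<Rightarrow> real \<Rightarrow> nat \<Rightarrow> real \<Rightarrow> real" where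
  "ef m g k = phi0 (omk m g k) (pp g (omk m g k)) (Ak k) (Bk k) (Ck m g k) (Dk m g k)"

lemma parity_trig:
  "odd k \<Longrightarrow> Bk k = 0" "even k \<Longrightarrow> Ak k = 0"
  "odd k \<Longrightarrow> Ak k \<noteq> 0" "even k \<Longrightarrow> Bk k \<noteq> 0"
proof -
  show o: "odd k \<Longrightarrow> Bk k = 0" unfolding Bk_def cos_zero_iff_int
    by (rule exI[of _ "int k"]) simp
  show e: "even k \<Longrightarrow> Ak k = 0" unfolding Ak_def sin_zero_iff_int
    by (rule exI[of _ "int k"]) simp
  have s: "(Ak k)^2 + (Bk k)^2 = 1" unfolding Ak_def Bk_def by simp
  show "odd k \<Longrightarrow> Ak k \<noteq> 0" using o s by auto
  show "even k \<Longrightarrow> Bk k \<noteq> 0" using e s by auto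
qed

lemma phi4_cont: "continuous_on S (phi4 w p A B C D)"
proof -
  have "continuous_on S (\<lambda>t. A * w^4 * cos (w * (t - pi/2)) + B * w^4 * sin (w * (t - pi/2))
      + C * p^4 * cosh (p * (t - pi/2)) + D * p^4 * sinh (p * (t - pi/2)))"
    by (intro continuous_intros)
  moreover have "(\<lambda>t. A * w^4 * cos (w * (t - pi/2)) + B * w^4 * sin (w * (t - pi/2))
      + C * p^4 * cosh (p * (t - pi/2)) + D * p^4 * sinh (p * (t - pi/2))) = phi4 w p A B C D"
    by (auto simp: phi4_def)
  ultimately show ?thesis by metis
qed

lemma phi_in_eigenspace:
  assumes g: "g > 0" and m: "m > 0" and Tm: "T / (pi * g) = m" and w: "w > 0"
    and bc: "phi0 w (pp g w) A B C D 0 = 0 \<and> phi0 w (pp g w) A B C D pi = 0 \<and>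
          m * phi2 w (pp g w) A B C D 0 = phi1 w (pp g w) A B C D 0 \<and>
          m * phi2 w (pp g w) A B C D pi = - phi1 w (pp g w) A B C D pi"
  shows "in_eigenspace T g (Lam g w) (phi0 w (pp g w) A B C D)"
  unfolding in_eigenspace_def
proof (intro exI conjI ballI)
  let ?p = "pp g w"
  have pe: "?p^2 = w^2 + g^2" using pp_facts[OF g] by simp
  fix t
  show "(phi0 w ?p A B C D has_real_derivative phi1 w ?p A B C D t) (at t within I0)" by (rule phi0_deriv)
  show "(phi1 w ?p A B C D has_real_derivative phi2 w ?p A B C D t) (at t within I0)" by (rule phi1_deriv)
  show "(phi2 w ?p A B C D has_real_derivative phi3 w ?p A B C D t) (at t within I0)" by (rule phi2_deriv)
  show "(phi3 w ?p A B C D has_real_derivative phi4 w ?p A B C D t) (at t within I0)" by (rule phi3_deriv)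
  show "phi4 w ?p A B C D t - g\<^sup>2 * phi2 w ?p A B C D t = Lam g w * phi0 w ?p A B C D t"
    using phi_ode[OF pe] unfolding Lam_def by simp
next
  show "continuous_on I0 (phi4 w (pp g w) A B C D)" by (rule phi4_cont)
qed (use bc Tm in auto)

lemma ef_in:
  assumes g: "g > 0" and m: "m > 0" and Tm: "T / (pi * g) = m" and k: "k \<ge> 1"
  shows "in_eigenspace T g (Lam g (omk m g k)) (ef m g k)"
proof -
  let ?w = "omk m g k"
  let ?p = "pp g ?w"
  have w: "?w > 0" using omk_spec[OF m g k] by simp
  have p: "?p > 0" using pp_facts[OF g] by simp
  have chp: "cosh (?p * (pi/2)) > 0" by simp
  have shp: "sinh (?p * (pi/2)) > 0" using p by simp
  have sys: "Ak k * cos (?w * (pi/2)) + Ck m g k * cosh (?p * (pi/2)) = 0 \<and>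
          Bk k * sin (?w * (pi/2)) + Dk m g k * sinh (?p * (pi/2)) = 0 \<and>
          Ak k * (m * ?w^2 * cos (?w * (pi/2)) + ?w * sin (?w * (pi/2))) = Ck m g k * (m * ?p^2 * cosh (?p * (pi/2)) + ?p * sinh (?p * (pi/2))) \<and>
          Bk k * (?w * cos (?w * (pi/2)) - m * ?w^2 * sin (?w * (pi/2))) + Dk m g k * (m * ?p^2 * sinh (?p * (pi/2)) + ?p * cosh (?p * (pi/2))) = 0"
  proof (cases "odd k")
    case True
    have E: "Ee m g ?w = 0" using Ee_zero_iff[OF m g w] k True by blast
    have C: "Ck m g k = - Ak k * cos (?w * (pi/2)) / cosh (?p * (pi/2))" unfolding Ck_def using True by simp
    have "Ak k * (m * ?w^2 * cos (?w * (pi/2)) + ?w * sin (?w * (pi/2))) = Ck m g k * (m * ?p^2 * cosh (?p * (pi/2)) + ?p * sinh (?p * (pi/2)))"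
      unfolding even_sys[OF chp C] using E unfolding Ee_unfold by simp
    then show ?thesis using True parity_trig(1)[OF True] C chp unfolding Dk_def by simp
  next
    case False
    have E: "Eo m g ?w = 0" using Eo_zero_iff[OF m g w] k False by blast
    have D: "Dk m g k = - Bk k * sin (?w * (pi/2)) / sinh (?p * (pi/2))" unfolding Dk_def using False by simp
    have "Bk k * (?w * cos (?w * (pi/2)) - m * ?w^2 * sin (?w * (pi/2))) + Dk m g k * (m * ?p^2 * sinh (?p * (pi/2)) + ?p * cosh (?p * (pi/2))) = 0"
      unfolding odd_sys[OF shp D] using E unfolding Eo_unfold by simp
    then show ?thesis using False parity_trig(2) D shp p unfolding Ck_def by simp
  qed
  have bc: "phi0 ?w ?p (Ak k) (Bk k) (Ck m g k) (Dk m g k) 0 = 0 \<and> phi0 ?w ?p (Ak k) (Bk k) (Ck m g k) (Dk m g k) pi = 0 \<and>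
          m * phi2 ?w ?p (Ak k) (Bk k) (Ck m g k) (Dk m g k) 0 = phi1 ?w ?p (Ak k) (Bk k) (Ck m g k) (Dk m g k) 0 \<and>
          m * phi2 ?w ?p (Ak k) (Bk k) (Ck m g k) (Dk m g k) pi = - phi1 ?w ?p (Ak k) (Bk k) (Ck m g k) (Dk m g k) pi"
    unfolding phi_bc using sys by simp
  show ?thesis unfolding ef_def by (rule phi_in_eigenspace[OF g m Tm w bc])
qed



lemma phi0_scale: "phi0 w p (a * A) (a * B) (a * C) (a * D) t = a * phi0 w p A B C D t"
  unfolding phi0_def by (simp add: algebra_simps)

lemma ef_span:
  assumes g: "g > 0" and m: "m > 0" and Tm: "T / (pi * g) = m" and k: "k \<ge> 1"
    and ins: "in_eigenspace T g (Lam g (omk m g k)) x"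
  shows "\<exists>a. \<forall>t\<in>I0. x t = a * ef m g k t"
proof -
  let ?w = "omk m g k"
  let ?p = "pp g ?w"
  have w: "?w > 0" using omk_spec[OF m g k] by simp
  obtain A B C D where r: "\<forall>t\<in>I0. x t = phi0 ?w ?p A B C D t"
     and AE: "A * Ee m g ?w = 0" and C: "C = - A * cos (?w * (pi/2)) / cosh (?p * (pi/2))"
     and BE: "B * Eo m g ?w = 0" and D: "D = - B * sin (?w * (pi/2)) / sinh (?p * (pi/2))"
    using ines_rep[OF g m Tm w] ins unfolding Lam_def by blast
  show ?thesis
  proof (cases "odd k")
    case True
    have "Eo m g ?w \<noteq> 0"
    proof
      assume "Eo m g ?w = 0"
      then obtain j where j: "j \<ge> 1" "even j" "?w = omk m g j" using Eo_zero_iff[OF m g w] by blast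
      then have "k = j" using omk_inj[OF m g k j(1)] by simp
      then show False using True j by simp
    qed
    then have B0: "B = 0" using BE by simp
    then have D0: "D = 0" using D by simp
    have A0: "Ak k \<noteq> 0" using parity_trig(3)[OF True] .
    define a where "a = A / Ak k"
    have Aa: "A = a * Ak k" unfolding a_def using A0 by simp
    have Ca: "C = a * Ck m g k" unfolding C Ck_def using True Aa by simp
    have Ba: "B = a * Bk k" using B0 parity_trig(1)[OF True] by simp
    have Da: "D = a * Dk m g k" using D0 True unfolding Dk_def by simp
    show ?thesis using r unfolding ef_def Aa Ba Ca Da phi0_scale by blast
  next
    case False
    have "Ee m g ?w \<noteq> 0"
    proof
      assume "Ee m g ?w = 0"
      then obtain j where j: "j \<ge> 1" "odd j" "?w = omk m g j" using Ee_zero_iff[OF m g w] by blast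
      then have "k = j" using omk_inj[OF m g k j(1)] by simp
      then show False using False j by simp
    qed
    then have A0: "A = 0" using AE by simp
    then have C0: "C = 0" using C by simp
    have B0: "Bk k \<noteq> 0" using parity_trig(4) False by simp
    define a where "a = B / Bk k"
    have Ba: "B = a * Bk k" unfolding a_def using B0 by simp
    have Da: "D = a * Dk m g k" unfolding D Dk_def using False Ba by simp
    have Aa: "A = a * Ak k" using A0 parity_trig(2) False by simp
    have Ca: "C = a * Ck m g k" using C0 False unfolding Ck_def by simp
    show ?thesis using r unfolding ef_def Aa Ba Ca Da phi0_scale by blast
  qed
qed

lemma ef_nonzero:
  assumes g: "g > 0" and m: "m > 0" and k: "k \<ge> 1"
  shows "\<exists>t\<in>I0. ef m g k t \<noteq> 0"
proof -
  let ?w = "omk m g k"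
  let ?p = "pp g ?w"
  have w1: "?w > 1" using omk_spec[OF m g k] k by simp
  have p: "?p > 0" using pp_facts[OF g] by simp
  show ?thesis
  proof (cases "odd k")
    case True
    have "ef m g k (pi/2) = Ak k * (1 - cos (?w * (pi/2)) / cosh (?p * (pi/2)))"
      unfolding ef_def phi0_def Ck_def Dk_def using True parity_trig(1)[OF True] by (simp add: algebra_simps)
    moreover have "cos (?w * (pi/2)) / cosh (?p * (pi/2)) < 1"
    proof -
      have "1 < cosh (?p * (pi/2))" using cosh_real_nonneg_less_iff[of 0 "?p * (pi/2)"] p by simp
      moreover have "cos (?w * (pi/2)) \<le> 1" by simp
      ultimately have "cos (?w * (pi/2)) < cosh (?p * (pi/2))" by linarith
      moreover have "cosh (?p * (pi/2)) > 0" by simp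
      ultimately show ?thesis by (simp add: divide_less_eq)
    qed
    ultimately have "ef m g k (pi/2) \<noteq> 0" using parity_trig(3)[OF True] by simp
    moreover have "pi/2 \<in> I0" using pi_gt_zero by simp
    ultimately show ?thesis by blast
  next
    case False
    define t0 where "t0 = pi/2 + pi / (2 * ?w)"
    have s0: "?w * (t0 - pi/2) = pi/2" unfolding t0_def using w1 by (simp add: field_simps)
    have sp: "?p * (t0 - pi/2) < ?p * (pi/2)" unfolding t0_def using w1 p
      by (simp add: divide_less_eq)
    have sp0: "?p * (t0 - pi/2) > 0" unfolding t0_def using w1 p by simp
    have "ef m g k t0 = Bk k * (1 - sin (?w * (pi/2)) * sinh (?p * (t0 - pi/2)) / sinh (?p * (pi/2)))"
      unfolding ef_def phi0_def Ck_def Dk_def s0 using False parity_trig(2)[of k] by (simp add: algebra_simps)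
    moreover have "sin (?w * (pi/2)) * sinh (?p * (t0 - pi/2)) / sinh (?p * (pi/2)) < 1"
    proof -
      have a: "sinh (?p * (t0 - pi/2)) < sinh (?p * (pi/2))" using sp by simp
      have b: "sinh (?p * (t0 - pi/2)) > 0" using sp0 by simp
      have "sin (?w * (pi/2)) * sinh (?p * (t0 - pi/2)) \<le> sinh (?p * (t0 - pi/2))"
        using b by (simp add: mult_le_cancel_right1)
      also have "\<dots> < sinh (?p * (pi/2))" by (rule a)
      finally show ?thesis using b a by (simp add: divide_less_eq)
    qed
    ultimately have "ef m g k t0 \<noteq> 0" using parity_trig(4)[of k] False
      by (metis mult_eq_0_iff right_minus_eq less_irrefl)
    moreover have "t0 \<in> I0"
    proof -
      have "pi / (2 * ?w) \<le> pi/2" using w1 by (simp add: field_simps)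
      then show ?thesis unfolding t0_def using w1 by simp
    qed
    ultimately show ?thesis by blast
  qed
qed



lemma mu_param:
  assumes g: "g > 0" and mu: "mu > 0"
  shows "\<exists>w>0. mu = Lam g w"
proof -
  define S where "S = sqrt (g^4 + 4 * mu)"
  have S2: "S^2 = g^4 + 4 * mu" unfolding S_def using mu g by simp
  have "g^2 < S" unfolding S_def using mu g
    by (intro real_less_rsqrt) (simp add: power2_eq_square power4_eq_xxxx)
  define w where "w = sqrt ((S - g^2) / 2)"
  have w2: "w^2 = (S - g^2) / 2" unfolding w_def using \<open>g^2 < S\<close> by simp
  have wp: "w > 0" unfolding w_def using \<open>g^2 < S\<close> by simp
  have "(pp g w)^2 = w^2 + g^2" using pp_facts[OF g] by simp
  then have "Lam g w = ((S - g^2) / 2) * ((S - g^2) / 2 + g^2)" unfolding Lam_def w2 by simp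
  also have "\<dots> = (S^2 - g^4) / 4" by (simp add: field_simps power2_eq_square power4_eq_xxxx)
  also have "\<dots> = mu" using S2 by simp
  finally show ?thesis using wp by auto
qed

lemma Lam_strict_mono:
  assumes g: "g > 0" and a: "0 < a" and ab: "a < b"
  shows "Lam g a < Lam g b"
proof -
  have pa: "(pp g a)^2 = a^2 + g^2" "(pp g b)^2 = b^2 + g^2" using pp_facts[OF g] by auto
  have "a^2 < b^2" using a ab by (simp add: power_strict_mono)
  moreover have "a^2 + g^2 < b^2 + g^2" using \<open>a^2 < b^2\<close> by simp
  moreover have "a^2 > 0" using a by simp
  ultimately have "a^2 * (a^2 + g^2) < b^2 * (b^2 + g^2)"
    by (intro mult_strict_mono) (auto simp: add_pos_nonneg)
  then show ?thesis unfolding Lam_def pa .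
qed

lemma Lam_inj:
  assumes g: "g > 0" and a: "0 < a" and b: "0 < b" and e: "Lam g a = Lam g b"
  shows "a = b"
proof (rule ccontr)
  assume "a \<noteq> b"
  then consider "a < b" | "b < a" by linarith
  then show False
  proof cases
    case 1 then show False using Lam_strict_mono[OF g a 1] e by simp
  next
    case 2 then show False using Lam_strict_mono[OF g b 2] e by simp
  qed
qed

lemma Lam_pos: assumes g: "g > 0" and a: "0 < a" shows "Lam g a > 0"
  using pp_facts(1)[OF g, of a] a unfolding Lam_def by simp

lemma eig_mult_char:
  assumes g: "g > 0" and m: "m > 0" and Tm: "T / (pi * g) = m"
  shows "eig_mult T g mu = (if \<exists>k\<ge>1. mu = Lam g (omk m g k) then 1 else 0)"
proof (cases "\<exists>k\<ge>1. mu = Lam g (omk m g k)")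
  case True
  then obtain k where k: "k \<ge> 1" "mu = Lam g (omk m g k)" by blast
  obtain t0 where t0: "t0 \<in> I0" "ef m g k t0 \<noteq> 0" using ef_nonzero[OF g m k(1)] by blast
  have "eig_mult T g mu = 1"
    unfolding k(2)
    by (rule eig_mult_one[OF _ ef_in[OF g m Tm k(1)] t0]) (rule ef_span[OF g m Tm k(1)])
  then show ?thesis using True by simp
next
  case False
  have "eig_mult T g mu = 0"
  proof (rule eig_mult_zero)
    fix x assume ins: "in_eigenspace T g mu x"
    show "\<forall>t\<in>I0. x t = 0"
    proof (cases "mu \<le> 0")
      case True then show ?thesis using energy_nonpos[OF g m Tm ins] by simp
    next
      case mpos: False
      have "mu > 0" using mpos by simp
      then obtain w where w: "w > 0" "mu = Lam g w" using mu_param[OF g] by blast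
      obtain A B C D where r: "\<forall>t\<in>I0. x t = phi0 w (pp g w) A B C D t"
         and AE: "A * Ee m g w = 0" and C: "C = - A * cos (w * (pi/2)) / cosh (pp g w * (pi/2))"
         and BE: "B * Eo m g w = 0" and D: "D = - B * sin (w * (pi/2)) / sinh (pp g w * (pi/2))"
        using ines_rep[OF g m Tm w(1)] ins w(2) unfolding Lam_def by blast
      have "Ee m g w \<noteq> 0"
      proof
        assume "Ee m g w = 0"
        then obtain j where j: "j \<ge> 1" "w = omk m g j" using Ee_zero_iff[OF m g w(1)] by blast
        then have "mu = Lam g (omk m g j)" using w(2) by simp
        then show False using False j(1) by blast
      qed
      then have A: "A = 0" using AE by simp
      have "Eo m g w \<noteq> 0"
      proof
        assume "Eo m g w = 0"
        then obtain j where j: "j \<ge> 1" "w = omk m g j" using Eo_zero_iff[OF m g w(1)] by blast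
        then have "mu = Lam g (omk m g j)" using w(2) by simp
        then show False using False j(1) by blast
      qed
      then have B: "B = 0" using BE by simp
      have "C = 0" "D = 0" using C D A B by simp_all
      then show ?thesis using r A B unfolding phi0_def by simp
    qed
  qed
  then show ?thesis using False by simp
qed



lemma enum_eq:
  fixes lam Lm :: "nat \<Rightarrow> real"
  assumes sm: "\<And>i j. 1 \<le> i \<Longrightarrow> i < j \<Longrightarrow> Lm i < Lm j"
    and incr: "\<forall>k\<ge>1. lam k \<le> lam (Suc k)"
    and cnt: "\<And>mu. finite {k. k \<ge> 1 \<and> lam k = mu}
        \<and> card {k. k \<ge> 1 \<and> lam k = mu} = (if \<exists>j\<ge>1. mu = Lm j then 1 else 0)"
    and n: "n \<ge> 1"
  shows "lam n = Lm n"
proof -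
  have mono: "lam i \<le> lam j" if "1 \<le> i" "i \<le> j" for i j
    using that
  proof (induction j)
    case 0 then show ?case by simp
  next
    case (Suc j)
    show ?case
    proof (cases "i = Suc j")
      case True then show ?thesis by simp
    next
      case False
      then have "i \<le> j" using Suc by simp
      then have "lam i \<le> lam j" using Suc by simp
      also have "\<dots> \<le> lam (Suc j)" using incr Suc \<open>i \<le> j\<close> by simp
      finally show ?thesis .
    qed
  qed
  have ex: "\<exists>j\<ge>1. lam k = Lm j" if k: "k \<ge> 1" for k
  proof -
    have "k \<in> {k'. k' \<ge> 1 \<and> lam k' = lam k}" using k by simp
    moreover have "finite {k'. k' \<ge> 1 \<and> lam k' = lam k}" using cnt[of "lam k"] by blast
    ultimately have "card {k'. k' \<ge> 1 \<and> lam k' = lam k} \<noteq> 0" by (metis card_0_eq empty_iff)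
    show ?thesis
    proof (rule ccontr)
      assume "\<not> ?thesis"
      then have "card {k'. k' \<ge> 1 \<and> lam k' = lam k} = 0" using cnt[of "lam k"] by (simp only: if_False)
      then show False using \<open>card {k'. k' \<ge> 1 \<and> lam k' = lam k} \<noteq> 0\<close> by simp
    qed
  qed
  have inj: "i = k" if ik: "i \<ge> 1" "k \<ge> 1" "lam i = lam k" for i k
  proof (rule ccontr)
    assume ne: "i \<noteq> k"
    obtain j where "j \<ge> 1" "lam k = Lm j" using ex[OF ik(2)] by blast
    then have e: "\<exists>j\<ge>1. lam k = Lm j" by blast
    have c1: "card {k'. k' \<ge> 1 \<and> lam k' = lam k} = 1" using cnt[of "lam k"] e by (simp only: if_True)
    have fin: "finite {k'. k' \<ge> 1 \<and> lam k' = lam k}" using cnt[of "lam k"] by blast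
    have "{i, k} \<subseteq> {k'. k' \<ge> 1 \<and> lam k' = lam k}" using ik by auto
    then have "card {i, k} \<le> card {k'. k' \<ge> 1 \<and> lam k' = lam k}"
      using fin by (rule card_mono[rotated])
    moreover have "card {i, k} = 2" using ne by simp
    ultimately show False using c1 by simp
  qed
  have ex2: "\<exists>i\<ge>1. lam i = Lm j" if j: "j \<ge> 1" for j
  proof -
    have e: "\<exists>j'\<ge>1. Lm j = Lm j'" using j by blast
    have "card {k. k \<ge> 1 \<and> lam k = Lm j} = 1" using cnt[of "Lm j"] e by (simp only: if_True)
    then have "{k. k \<ge> 1 \<and> lam k = Lm j} \<noteq> {}" by (metis card.empty zero_neq_one)
    then show ?thesis by auto
  qed
  show ?thesis using n
  proof (induction n rule: less_induct)
    case (less n)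
    obtain j where j: "j \<ge> 1" "lam n = Lm j" using ex less.prems by blast
    obtain i where i: "i \<ge> 1" "lam i = Lm n" using ex2 less.prems by blast
    have jn: "\<not> j < n"
    proof
      assume "j < n"
      then have "lam j = Lm j" using less.IH j(1) by blast
      then have "j = n" using inj[OF j(1) less.prems] j(2) by simp
      then show False using \<open>j < n\<close> by simp
    qed
    have in_: "\<not> i < n"
    proof
      assume "i < n"
      then have "lam i = Lm i" using less.IH i(1) by blast
      then have "Lm i = Lm n" using i(2) by simp
      then show False using sm[OF i(1) \<open>i < n\<close>] by simp
    qed
    have "\<not> n < j"
    proof
      assume "n < j"
      then have "Lm n < Lm j" using sm less.prems by blast
      moreover have "lam n \<le> lam i" using mono less.prems in_ by simp
      ultimately show False using i j by simp
    qed
    then have "j = n" using jn by simp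
    then show ?case using j by simp
  qed
qed

lemma Lm_strict:
  assumes g: "g > 0" and m: "m > 0" and i: "1 \<le> i" and ij: "i < j"
  shows "Lam g (omk m g i) < Lam g (omk m g j)"
proof -
  have a: "real i < omk m g i" "omk m g i < real i + 1" using omk_spec[OF m g i] by auto
  have b: "real j < omk m g j" using omk_spec[OF m g] i ij by auto
  have "real i + 1 \<le> real j" using ij by simp
  then have "omk m g i < omk m g j" using a b by linarith
  moreover have "omk m g i > 0" using a i by simp
  ultimately show ?thesis using Lam_strict_mono[OF g] by blast
qed



lemma delta_bound:
  assumes m: "m > 0" and g: "g > 0" and k: "k \<ge> 1"
  shows "0 < omk m g k - real k" "(omk m g k - real k) * (pi/2) \<le> 1 / (2 * m * real k)"
proof -
  let ?w = "omk m g k"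
  have o: "real k < ?w" "?w < real k + 1" "psi (NN m g k) ?w = real k * (pi/2)" using omk_spec[OF m g k] by auto
  show "0 < ?w - real k" using o by simp
  have w: "?w > 0" using o k by simp
  have N: "NN m g k ?w \<ge> m * (?w^2 + (pp g ?w)^2)" using NN_facts(4)[OF m g w] by simp
  have pw: "?w \<le> pp g ?w" using pp_facts(3)[OF g] by simp
  have "?w^2 \<le> (pp g ?w)^2" using pw w by (simp add: power_mono)
  then have "m * (?w^2 + ?w^2) \<le> m * (?w^2 + (pp g ?w)^2)" using m by (intro mult_left_mono) auto
  then have N2: "NN m g k ?w \<ge> 2 * m * ?w^2" using N by simp
  have Np: "2 * m * ?w^2 > 0" using m w by simp
  have "(?w - real k) * (pi/2) = arctan (?w / NN m g k ?w)"
    using o(3) unfolding psi_def by (simp add: algebra_simps)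
  also have "\<dots> \<le> ?w / NN m g k ?w" using w N2 Np by (intro arctan_le_self) simp
  also have "\<dots> \<le> ?w / (2 * m * ?w^2)" using w N2 Np by (intro divide_left_mono) auto
  also have "\<dots> = 1 / (2 * m * ?w)" using w by (simp add: power2_eq_square)
  also have "\<dots> \<le> 1 / (2 * m * real k)"
  proof -
    have "2 * m * real k \<le> 2 * m * ?w" using m o by simp
    moreover have "2 * m * real k > 0" using m k by simp
    ultimately show ?thesis by (intro frac_le) auto
  qed
  finally show "(?w - real k) * (pi/2) \<le> 1 / (2 * m * real k)" .
qed

lemma lam_asym_bound:
  assumes m: "m > 0" and g: "g > 0" and k: "k \<ge> 1"
  shows "\<bar>Lam g (omk m g k) - real k ^ 4\<bar> \<le> (15 / (pi * m) + 4 * g^2) * (real k)^2"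
proof -
  let ?w = "omk m g k"
  define x where "x = real k"
  have x1: "x \<ge> 1" unfolding x_def using k by simp
  have o: "x < ?w" "?w < x + 1" using omk_spec[OF m g k] unfolding x_def by auto
  have db: "(?w - x) * (pi/2) \<le> 1 / (2 * m * x)" using delta_bound(2)[OF m g k] unfolding x_def .
  have d: "?w - x \<le> (1 / (pi * m)) / x"
  proof -
    have "(?w - x) = ((?w - x) * (pi/2)) * (2 / pi)" by simp
    also have "\<dots> \<le> (1 / (2 * m * x)) * (2 / pi)" using db by (intro mult_right_mono) auto
    also have "\<dots> = (1 / (pi * m)) / x" by (simp add: field_simps)
    finally show ?thesis .
  qed
  have Lw: "Lam g ?w = ?w^4 + g^2 * ?w^2"
    using pp_facts(2)[OF g, of ?w] unfolding Lam_def by (simp add: algebra_simps power4_eq_xxxx power2_eq_square)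
  have f: "?w^4 - x^4 = (?w - x) * ((?w + x) * (?w^2 + x^2))"
    by (simp add: algebra_simps power4_eq_xxxx power2_eq_square)
  have b1: "?w + x \<le> 3 * x" using o x1 by simp
  have "?w^2 \<le> (x+1)^2" using o x1 by (intro power_mono) auto
  also have "\<dots> \<le> (2*x)^2" using x1 by (intro power_mono) auto
  finally have ww: "?w^2 \<le> 4 * x^2" by (simp add: power2_eq_square)
  have b2: "?w^2 + x^2 \<le> 5 * x^2" using ww by simp
  have nn: "0 \<le> ?w - x" "0 \<le> ?w + x" "0 \<le> ?w^2 + x^2" using o x1 by auto
  have pb: "(?w + x) * (?w^2 + x^2) \<le> (3 * x) * (5 * x^2)"
    using b1 b2 nn x1 by (intro mult_mono) auto
  have "?w^4 - x^4 \<le> ((1 / (pi * m)) / x) * ((3 * x) * (5 * x^2))"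
    unfolding f by (rule mult_mono[OF d pb]) (use nn m x1 in auto)
  also have "\<dots> = 15 / (pi * m) * x^2" using x1 by (simp add: field_simps power2_eq_square)
  finally have A: "?w^4 - x^4 \<le> 15 / (pi * m) * x^2" .
  have A0: "?w^4 - x^4 \<ge> 0" unfolding f using nn by simp
  have "g^2 * ?w^2 \<le> g^2 * (4 * x^2)" using ww by (intro mult_left_mono) auto
  then have B: "g^2 * ?w^2 \<le> 4 * g^2 * x^2" by simp
  have B0: "g^2 * ?w^2 \<ge> 0" by simp
  have "Lam g ?w - x ^ 4 = (?w^4 - x^4) + g^2 * ?w^2" using Lw by simp
  moreover have "(?w^4 - x^4) + g^2 * ?w^2 \<ge> 0" using A0 B0 by simp
  ultimately have "\<bar>Lam g ?w - x ^ 4\<bar> = (?w^4 - x^4) + g^2 * ?w^2" by simp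
  also have "\<dots> \<le> (15 / (pi * m) + 4 * g^2) * x^2" using A B by (simp add: algebra_simps)
  finally show ?thesis unfolding x_def .
qed

lemma part_a:
  assumes m: "m > 0" and g: "g > 0" and eq: "\<forall>k\<ge>1. lam k = Lam g (omk m g k)"
  shows "(\<lambda>k. lam k - real k ^ 4) \<in> O(\<lambda>k. real k ^ 2)"
proof (rule bigoI[where c = "15 / (pi * m) + 4 * g^2"])
  show "\<forall>\<^sub>F k in at_top. norm (lam k - real k ^ 4) \<le> (15 / (pi * m) + 4 * g^2) * norm (real k ^ 2)"
    unfolding eventually_sequentially
  proof (intro exI[of _ 1] allI impI)
    fix k :: nat assume k: "1 \<le> k"
    show "norm (lam k - real k ^ 4) \<le> (15 / (pi * m) + 4 * g^2) * norm (real k ^ 2)"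
      using lam_asym_bound[OF m g k] eq k by simp
  qed
qed



lemma Cj_cos:
  fixes a b c d B :: real
  assumes b0: "\<forall>t\<in>I0. \<bar>a * cos (b * t + c) + d\<bar> \<le> B"
    and bl: "\<forall>l. 1 \<le> l \<longrightarrow> l \<le> j \<longrightarrow> \<bar>a\<bar> * \<bar>b\<bar> ^ l \<le> B"
  shows "Cj_norm_le j (\<lambda>t. a * cos (b * t + c) + d) B"
  unfolding Cj_norm_le_def
proof (intro exI[of _ "\<lambda>l t. if l = 0 then a * cos (b * t + c) + d else a * b ^ l * cos (b * t + c + real l * (pi/2))"] conjI allI impI ballI)
  fix t :: real show "(if 0 = (0::nat) then a * cos (b * t + c) + d else a * b ^ 0 * cos (b * t + c + real 0 * (pi / 2))) = a * cos (b * t + c) + d" by simp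
next
  fix l :: nat and t :: real assume l: "l < j" and t: "t \<in> I0"
  show "((\<lambda>t. if l = 0 then a * cos (b * t + c) + d else a * b ^ l * cos (b * t + c + real l * (pi/2))) has_real_derivative
      (if Suc l = 0 then a * cos (b * t + c) + d else a * b ^ Suc l * cos (b * t + c + real (Suc l) * (pi/2)))) (at t within I0)"
  proof (cases "l = 0")
    case True
    have "((\<lambda>t. a * cos (b * t + c) + d) has_real_derivative a * (- sin (b * t + c) * (b * 1 + 0)) + 0) (at t within I0)"
      by (auto intro!: derivative_eq_intros)
    moreover have "a * (- sin (b * t + c) * (b * 1 + 0)) + 0 = a * b ^ Suc 0 * cos (b * t + c + real (Suc 0) * (pi/2))"
      by (simp add: cos_add)
    ultimately show ?thesis using True by simp
  next
    case False
    have "((\<lambda>t. a * b ^ l * cos (b * t + c + real l * (pi/2))) has_real_derivative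
        a * b ^ l * (- sin (b * t + c + real l * (pi/2)) * (b * 1 + 0 + 0))) (at t within I0)"
      by (auto intro!: derivative_eq_intros)
    moreover have "a * b ^ l * (- sin (b * t + c + real l * (pi/2)) * (b * 1 + 0 + 0)) = a * b ^ Suc l * cos (b * t + c + real (Suc l) * (pi/2))"
    proof -
      have e: "b * t + c + real (Suc l) * (pi/2) = (b * t + c + real l * (pi/2)) + pi/2" by (simp add: algebra_simps)
      have "cos (b * t + c + real (Suc l) * (pi/2)) = - sin (b * t + c + real l * (pi/2))"
        unfolding e by (simp only: cos_add cos_pi_half sin_pi_half mult_zero_right mult_1_right diff_zero)
      then show ?thesis by simp
    qed
    ultimately show ?thesis using False by simp
  qed
next
  fix l :: nat assume l: "l \<le> j"
  show "continuous_on I0 (\<lambda>t. if l = 0 then a * cos (b * t + c) + d else a * b ^ l * cos (b * t + c + real l * (pi/2)))"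
    by (cases "l = 0") (simp_all add: continuous_intros)
next
  fix l :: nat and t :: real assume l: "l \<le> j" and t: "t \<in> I0"
  show "\<bar>if l = 0 then a * cos (b * t + c) + d else a * b ^ l * cos (b * t + c + real l * (pi/2))\<bar> \<le> B"
  proof (cases "l = 0")
    case True then show ?thesis using b0 t by simp
  next
    case False
    have "\<bar>a * b ^ l * cos (b * t + c + real l * (pi/2))\<bar> = \<bar>a\<bar> * \<bar>b\<bar> ^ l * \<bar>cos (b * t + c + real l * (pi/2))\<bar>"
      by (simp add: abs_mult power_abs)
    also have "\<dots> \<le> \<bar>a\<bar> * \<bar>b\<bar> ^ l * 1" by (intro mult_left_mono) auto
    also have "\<dots> \<le> B" using bl l False by simp
    finally show ?thesis using False by simp
  qed
qed

lemma Cj_exp: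
  fixes a b c B :: real
  assumes bl: "\<forall>l\<le>j. \<forall>t\<in>I0. \<bar>a\<bar> * \<bar>b\<bar> ^ l * exp (b * t + c) \<le> B"
  shows "Cj_norm_le j (\<lambda>t. a * exp (b * t + c)) B"
  unfolding Cj_norm_le_def
proof (intro exI[of _ "\<lambda>l t. a * b ^ l * exp (b * t + c)"] conjI allI impI ballI)
  fix t :: real show "a * b ^ 0 * exp (b * t + c) = a * exp (b * t + c)" by simp
next
  fix l :: nat and t :: real assume l: "l < j" and t: "t \<in> I0"
  have der: "((\<lambda>t. a * b ^ l * exp (b * t + c)) has_real_derivative a * b ^ l * (exp (b * t + c) * b)) (at t within I0)"
    by (auto intro!: derivative_eq_intros)
  have eq: "a * b ^ Suc l * exp (b * t + c) = a * b ^ l * (exp (b * t + c) * b)"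
    by (simp add: mult_ac)
  show "((\<lambda>t. a * b ^ l * exp (b * t + c)) has_real_derivative a * b ^ Suc l * exp (b * t + c)) (at t within I0)"
    unfolding eq by (rule der)
next
  fix l :: nat assume "l \<le> j"
  show "continuous_on I0 (\<lambda>t. a * b ^ l * exp (b * t + c))" by (intro continuous_intros)
next
  fix l :: nat and t :: real assume l: "l \<le> j" and t: "t \<in> I0"
  have "\<bar>a * b ^ l * exp (b * t + c)\<bar> = \<bar>a\<bar> * \<bar>b\<bar> ^ l * exp (b * t + c)"
    by (simp add: abs_mult power_abs)
  then show "\<bar>a * b ^ l * exp (b * t + c)\<bar> \<le> B" using bl l t by simp
qed

lemma Cj_mono:
  assumes "Cj_norm_le j f B" "B \<le> B'" shows "Cj_norm_le j f B'"
proof -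
  obtain D where D: "(\<forall>t\<in>I0. D 0 t = f t)"
     "(\<forall>l<j. \<forall>t\<in>I0. (D l has_real_derivative D (Suc l) t) (at t within I0))"
     "(\<forall>l\<le>j. continuous_on I0 (D l))" "(\<forall>l\<le>j. \<forall>t\<in>I0. \<bar>D l t\<bar> \<le> B)"
    using assms(1) unfolding Cj_norm_le_def by blast
  have "\<forall>l\<le>j. \<forall>t\<in>I0. \<bar>D l t\<bar> \<le> B'" using D(4) assms(2) by force
  then show ?thesis unfolding Cj_norm_le_def using D(1-3) by blast
qed



definition dk :: "real \<Rightarrow> real \<Rightarrow> nat \<Rightarrow> real" where "dk m g k = omk m g k - real k"
definition qk :: "real \<Rightarrow> real \<Rightarrow> nat \<Rightarrow> real" where "qk m g k = pp g (omk m g k) - real k"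
definition K3 :: "real \<Rightarrow> real \<Rightarrow> nat \<Rightarrow> real" where
  "K3 m g k = real k * (Ck m g k - Dk m g k) * exp (pp g (omk m g k) * (pi/2)) / 2"
definition K4 :: "real \<Rightarrow> real \<Rightarrow> nat \<Rightarrow> real" where
  "K4 m g k = real k * (Ck m g k + Dk m g k) * exp (pp g (omk m g k) * (pi/2)) / 2"
definition gf :: "real \<Rightarrow> real \<Rightarrow> nat \<Rightarrow> nat \<Rightarrow> real \<Rightarrow> real" where
  "gf m g i k = (if i = 1 then (\<lambda>t. real k * cos (dk m g k * t + - (dk m g k * (pi/2))) + - real k)
     else if i = 2 then (\<lambda>t. real k * cos (dk m g k * t + (- (dk m g k * (pi/2)) - pi/2)) + 0)
     else if i = 3 then (\<lambda>t. K3 m g k * exp ((- qk m g k) * t + 0))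
     else (\<lambda>t. K4 m g k * exp (qk m g k * t + - (qk m g k * pi))))"

lemma decomp:
  assumes k: "k \<ge> 1"
  shows "ef m g k t = sin (real k * t) + (1 / real k) * (\<Sum>i\<in>{1..4}. gf m g i k t * fbasis i k t)"
proof -
  let ?w = "omk m g k" and ?p = "pp g (omk m g k)" and ?d = "dk m g k" and ?q = "qk m g k"
  define s where "s = t - pi/2"
  define x where "x = real k"
  have x0: "x \<noteq> 0" unfolding x_def using k by simp
  have wdef: "?w = x + ?d" unfolding dk_def x_def by simp
  have pdef: "?p = x + ?q" unfolding qk_def x_def by simp
  have t1: "Ak k * cos (?w * s) + Bk k * sin (?w * s) = sin (x * t) * cos (?d * s) + cos (x * t) * sin (?d * s)"
  proof -
    have "Ak k * cos (?w * s) + Bk k * sin (?w * s) = sin (?w * s + x * (pi/2))"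
      unfolding Ak_def Bk_def x_def by (simp add: sin_add algebra_simps)
    also have "?w * s + x * (pi/2) = x * t + ?d * s" unfolding wdef s_def by (simp add: algebra_simps)
    finally show ?thesis by (simp add: sin_add)
  qed
  have ex1: "exp (- (?p * s)) = exp (?p * (pi/2)) * exp ((- ?q) * t + 0) * exp (- x * t)"
    unfolding s_def pdef by (simp add: exp_add[symmetric] algebra_simps)
  have ex2: "exp (?p * s) = exp (?p * (pi/2)) * exp (?q * t + - (?q * pi)) * exp (- x * (pi - t))"
    unfolding s_def pdef by (simp add: exp_add[symmetric] algebra_simps)
  have h1: "Ck m g k * cosh (?p * s) + Dk m g k * sinh (?p * s)
      = (Ck m g k - Dk m g k) / 2 * exp (- (?p * s)) + (Ck m g k + Dk m g k) / 2 * exp (?p * s)"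
    by (simp add: cosh_field_def sinh_field_def field_simps)
  have sum4: "(\<Sum>i\<in>{1..4}. gf m g i k t * fbasis i k t) =
      gf m g 1 k t * fbasis 1 k t + gf m g 2 k t * fbasis 2 k t + gf m g 3 k t * fbasis 3 k t + gf m g 4 k t * fbasis 4 k t"
  proof -
    have "{1..4::nat} = {1,2,3,4}" by auto
    then show ?thesis by simp
  qed
  have g1: "gf m g 1 k t = x * cos (?d * s) - x" unfolding gf_def s_def x_def by (simp add: algebra_simps)
  have g2: "gf m g 2 k t = x * sin (?d * s)"
  proof -
    have "gf m g 2 k t = x * cos (?d * s - pi/2)" unfolding gf_def s_def x_def by (simp add: algebra_simps)
    also have "cos (?d * s - pi/2) = sin (?d * s)" by (simp add: cos_diff)
    finally show ?thesis .
  qed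
  have g3: "gf m g 3 k t = K3 m g k * exp ((- ?q) * t + 0)" unfolding gf_def by simp
  have g4: "gf m g 4 k t = K4 m g k * exp (?q * t + - (?q * pi))" unfolding gf_def by simp
  have fb: "fbasis 1 k t = sin (x * t)" "fbasis 2 k t = cos (x * t)" "fbasis 3 k t = exp (- x * t)"
      "fbasis 4 k t = exp (- x * (pi - t))" unfolding fbasis_def x_def by simp_all
  have "ef m g k t = (Ak k * cos (?w * s) + Bk k * sin (?w * s)) + (Ck m g k * cosh (?p * s) + Dk m g k * sinh (?p * s))"
    unfolding ef_def phi0_def s_def by simp
  also have "\<dots> = sin (x * t) * cos (?d * s) + cos (x * t) * sin (?d * s)
      + ((Ck m g k - Dk m g k) / 2 * (exp (?p * (pi/2)) * exp ((- ?q) * t + 0) * exp (- x * t))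
      + (Ck m g k + Dk m g k) / 2 * (exp (?p * (pi/2)) * exp (?q * t + - (?q * pi)) * exp (- x * (pi - t))))"
    unfolding t1 h1 ex1 ex2 by simp
  also have "\<dots> = sin (x * t) + (1 / x) * (gf m g 1 k t * fbasis 1 k t + gf m g 2 k t * fbasis 2 k t + gf m g 3 k t * fbasis 3 k t + gf m g 4 k t * fbasis 4 k t)"
    unfolding g1 g2 g3 g4 fb K3_def K4_def x_def[symmetric] using x0 by (simp add: field_simps)
  finally show ?thesis unfolding sum4 x_def .
qed



lemma one_minus_cos_le: fixes y :: real shows "1 - cos y \<le> y^2 / 2" "0 \<le> 1 - cos y"
proof -
  have c: "cos y = 1 - 2 * (sin (y/2))^2" using cos_double_sin[of "y/2"] by simp
  have "\<bar>sin (y/2)\<bar> \<le> \<bar>y/2\<bar>" by (rule abs_sin_x_le_abs_x)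
  then have "(sin (y/2))^2 \<le> (y/2)^2" by (metis abs_le_square_iff power2_abs)
  then show "1 - cos y \<le> y^2 / 2" unfolding c by (simp add: power_divide)
  show "0 \<le> 1 - cos y" by simp
qed

lemma basic_k_facts:
  assumes m: "m > 0" and g: "g > 0" and k: "k \<ge> 1"
  shows "0 < dk m g k" "dk m g k < 1" "dk m g k * (pi/2) \<le> 1 / (2 * m * real k)"
    "real k * (dk m g k * (pi/2)) \<le> 1 / (2 * m)" "dk m g k * (pi/2) \<le> 1 / (2 * m)"
    "real k * dk m g k \<le> 1 / m" "0 \<le> qk m g k" "qk m g k \<le> g + 1"
proof -
  have o: "real k < omk m g k" "omk m g k < real k + 1" using omk_spec[OF m g k] by auto
  show d0: "0 < dk m g k" "dk m g k < 1" using o unfolding dk_def by auto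
  show d1: "dk m g k * (pi/2) \<le> 1 / (2 * m * real k)" using delta_bound(2)[OF m g k] unfolding dk_def .
  have kp: "real k > 0" using k by simp
  have "real k * (dk m g k * (pi/2)) \<le> real k * (1 / (2 * m * real k))"
    using d1 kp by (intro mult_left_mono) auto
  also have "\<dots> = 1 / (2 * m)" using kp by simp
  finally show d2: "real k * (dk m g k * (pi/2)) \<le> 1 / (2 * m)" .
  have "1 / (2 * m * real k) \<le> 1 / (2 * m)" using m k by (intro frac_le) auto
  then show "dk m g k * (pi/2) \<le> 1 / (2 * m)" using d1 by linarith
  have "real k * dk m g k = real k * (dk m g k * (pi/2)) * (2 / pi)" by simp
  also have "\<dots> \<le> 1 / (2 * m) * (2 / pi)" using d2 by (intro mult_right_mono) auto
  also have "\<dots> = 1 / (m * pi)" by simp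
  also have "\<dots> \<le> 1 / m" using m pi_gt3 by (intro frac_le) auto
  finally show "real k * dk m g k \<le> 1 / m" .
  have pw: "omk m g k \<le> pp g (omk m g k)" "pp g (omk m g k) \<le> \<bar>omk m g k\<bar> + g"
    using pp_facts(3,4)[OF g] by auto
  show "0 \<le> qk m g k" using pw o unfolding qk_def by simp
  show "qk m g k \<le> g + 1" using pw o k unfolding qk_def by simp
qed

lemma CD_bound:
  assumes m: "m > 0" and g: "g > 0" and k: "k \<ge> 1"
  shows "(\<bar>Ck m g k\<bar> + \<bar>Dk m g k\<bar>) * exp (pp g (omk m g k) * (pi/2)) \<le> 4 * (dk m g k * (pi/2))"
proof -
  let ?w = "omk m g k" and ?p = "pp g (omk m g k)" and ?d = "dk m g k"
  define E where "E = exp (?p * (pi/2))"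
  define x where "x = ?p * (pi/2)"
  have E0: "E > 0" unfolding E_def by simp
  have w1: "?w > 1" using omk_spec[OF m g k] k by simp
  have pw: "?w \<le> ?p" using pp_facts(3)[OF g] by simp
  have "1 * 1 \<le> ?p * (pi/2)" by (rule mult_mono) (use w1 pw pi_gt3 in auto)
  then have x1: "x \<ge> 1" unfolding x_def by simp
  have dpos: "0 \<le> ?d * (pi/2)" using basic_k_facts(1)[OF m g k] by simp
  have sd: "\<bar>sin (?d * (pi/2))\<bar> \<le> ?d * (pi/2)" using abs_sin_x_le_abs_x[of "?d * (pi/2)"] dpos by simp
  have wL: "?w * (pi/2) = real k * (pi/2) + ?d * (pi/2)" unfolding dk_def by (simp add: algebra_simps)
  have cosh_ge: "cosh x \<ge> E / 2" unfolding E_def x_def cosh_field_def by (simp add: field_simps)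
  have sinh_ge: "sinh x \<ge> E / 4"
  proof -
    have "exp x \<ge> 1 + x" by (rule exp_ge_add_one_self)
    then have ex2: "exp x \<ge> 2" using x1 by linarith
    then have "exp x * exp x \<ge> 2 * 2" by (intro mult_mono) auto
    then have "exp (- x) \<le> exp x / 2"
      by (simp add: exp_minus field_simps)
    then show ?thesis unfolding E_def x_def[symmetric] sinh_field_def by simp
  qed
  have Ak1: "\<bar>Ak k\<bar> \<le> 1" "\<bar>Bk k\<bar> \<le> 1" unfolding Ak_def Bk_def by auto
  show ?thesis
  proof (cases "odd k")
    case True
    have "cos (?w * (pi/2)) = Bk k * cos (?d * (pi/2)) - Ak k * sin (?d * (pi/2))"
      unfolding wL Ak_def Bk_def by (simp add: cos_add)
    then have cw: "cos (?w * (pi/2)) = - Ak k * sin (?d * (pi/2))" using parity_trig(1)[OF True] by simp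
    have "\<bar>cos (?w * (pi/2))\<bar> \<le> ?d * (pi/2)" unfolding cw using Ak1 sd
      by (simp add: abs_mult) (smt (verit) mult_left_le_one_le abs_ge_zero)
    then have a: "\<bar>Ak k * cos (?w * (pi/2))\<bar> \<le> ?d * (pi/2)" using Ak1
      by (simp add: abs_mult) (smt (verit) mult_left_le_one_le abs_ge_zero)
    have "\<bar>Ck m g k\<bar> = \<bar>Ak k * cos (?w * (pi/2))\<bar> / cosh x" unfolding Ck_def x_def using True by (simp add: abs_mult)
    then have "\<bar>Ck m g k\<bar> * E = \<bar>Ak k * cos (?w * (pi/2))\<bar> * (E / cosh x)" by simp
    also have "\<dots> \<le> (?d * (pi/2)) * 2"
    proof (rule mult_mono[OF a])
      have "cosh x > 0" by simp
      then show "E / cosh x \<le> 2" using cosh_ge E0 by (simp add: divide_le_eq)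
    qed (use dpos E0 in auto)
    finally have "\<bar>Ck m g k\<bar> * E \<le> 2 * (?d * (pi/2))" by simp
    moreover have "Dk m g k = 0" unfolding Dk_def using True by simp
    ultimately show ?thesis unfolding E_def using dpos by (simp add: algebra_simps)
  next
    case False
    have "sin (?w * (pi/2)) = Ak k * cos (?d * (pi/2)) + Bk k * sin (?d * (pi/2))"
      unfolding wL Ak_def Bk_def by (simp add: sin_add)
    then have sw: "sin (?w * (pi/2)) = Bk k * sin (?d * (pi/2))" using parity_trig(2) False by simp
    have "\<bar>sin (?w * (pi/2))\<bar> \<le> ?d * (pi/2)" unfolding sw using Ak1 sd
      by (simp add: abs_mult) (smt (verit) mult_left_le_one_le abs_ge_zero)
    then have a: "\<bar>Bk k * sin (?w * (pi/2))\<bar> \<le> ?d * (pi/2)" using Ak1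
      by (simp add: abs_mult) (smt (verit) mult_left_le_one_le abs_ge_zero)
    have sx: "sinh x > 0" unfolding x_def using pp_facts(1)[OF g] by simp
    have "\<bar>Dk m g k\<bar> = \<bar>Bk k * sin (?w * (pi/2))\<bar> / sinh x" unfolding Dk_def x_def using False sx
      by (simp add: abs_mult x_def)
    then have "\<bar>Dk m g k\<bar> * E = \<bar>Bk k * sin (?w * (pi/2))\<bar> * (E / sinh x)" by simp
    also have "\<dots> \<le> (?d * (pi/2)) * 4"
    proof (rule mult_mono[OF a])
      show "E / sinh x \<le> 4" using sinh_ge sx E0 by (simp add: divide_le_eq)
    qed (use dpos E0 sx in auto)
    finally have "\<bar>Dk m g k\<bar> * E \<le> 4 * (?d * (pi/2))" by simp
    moreover have "Ck m g k = 0" unfolding Ck_def using False by simp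
    ultimately show ?thesis unfolding E_def by simp
  qed
qed



lemma K_bound:
  assumes m: "m > 0" and g: "g > 0" and k: "k \<ge> 1"
  shows "\<bar>K3 m g k\<bar> \<le> 1 / m" "\<bar>K4 m g k\<bar> \<le> 1 / m"
proof -
  define E where "E = exp (pp g (omk m g k) * (pi/2))"
  have E0: "E > 0" unfolding E_def by simp
  have cd: "(\<bar>Ck m g k\<bar> + \<bar>Dk m g k\<bar>) * E \<le> 4 * (dk m g k * (pi/2))" using CD_bound[OF m g k] unfolding E_def .
  have kk: "real k * (dk m g k * (pi/2)) \<le> 1 / (2 * m)" using basic_k_facts(4)[OF m g k] .
  have gen: "\<bar>real k * X * E / 2\<bar> \<le> 1 / m" if X: "\<bar>X\<bar> \<le> \<bar>Ck m g k\<bar> + \<bar>Dk m g k\<bar>" for X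
  proof -
    have "\<bar>real k * X * E / 2\<bar> = real k * (\<bar>X\<bar> * E) / 2" using E0 by (simp add: abs_mult)
    also have "\<dots> \<le> real k * (4 * (dk m g k * (pi/2))) / 2"
    proof -
      have "\<bar>X\<bar> * E \<le> (\<bar>Ck m g k\<bar> + \<bar>Dk m g k\<bar>) * E" using X E0 by (intro mult_right_mono) auto
      then have "\<bar>X\<bar> * E \<le> 4 * (dk m g k * (pi/2))" using cd by linarith
      then show ?thesis by (intro divide_right_mono mult_left_mono) auto
    qed
    also have "\<dots> = 2 * (real k * (dk m g k * (pi/2)))" by simp
    also have "\<dots> \<le> 2 * (1 / (2 * m))" using kk by simp
    also have "\<dots> = 1 / m" by simp
    finally show ?thesis .
  qed
  show "\<bar>K3 m g k\<bar> \<le> 1 / m" unfolding K3_def E_def[symmetric] by (rule gen) simp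
  show "\<bar>K4 m g k\<bar> \<le> 1 / m" unfolding K4_def E_def[symmetric] by (rule gen) simp
qed

lemma gf_bounds:
  assumes m: "m > 0" and g: "g > 0"
  shows "\<exists>B. \<forall>i\<in>{1..4}. \<forall>k\<ge>1. Cj_norm_le j (gf m g i k) B"
proof -
  define B where "B = 1 / (8 * m^2) + 1 / m + (g + 2)^j / m"
  have B0: "1 / (8 * m^2) \<le> B" "1 / m \<le> B" "(g + 2)^j / m \<le> B"
    unfolding B_def using m g by (auto simp: add_pos_nonneg)
  have "1 / (2 * m) \<le> 1 / m" using m by (intro frac_le) auto
  then have B1: "1 / (8 * m^2) \<le> B" "1 / m \<le> B" "(g + 2)^j / m \<le> B" "1 / (2 * m) \<le> B"
    using B0 by auto
  have all: "Cj_norm_le j (gf m g i k) B" if i: "i \<in> {1..4}" and k: "k \<ge> 1" for i k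
  proof -
    let ?d = "dk m g k" and ?q = "qk m g k"
    note F = basic_k_facts[OF m g k]
    have kp: "real k > 0" using k by simp
    have kdl: "real k * ?d ^ l \<le> B" if l: "1 \<le> l" for l
    proof -
      have "?d ^ l \<le> ?d ^ 1" using F(1,2) l by (intro power_decreasing) auto
      then have "real k * ?d ^ l \<le> real k * ?d" using kp by (intro mult_left_mono) auto
      then show ?thesis using F(6) B1(2) by simp
    qed
    have ql: "\<bar>?q\<bar> ^ l \<le> (g + 2) ^ j" if l: "l \<le> j" for l
    proof -
      have "\<bar>?q\<bar> ^ l \<le> (g + 2) ^ l" using F(7,8) by (intro power_mono) auto
      also have "\<dots> \<le> (g + 2) ^ j" using l g by (intro power_increasing) auto
      finally show ?thesis .
    qed
    have ex_bound: "\<bar>K\<bar> * \<bar>b\<bar> ^ l * exp z \<le> B" if "\<bar>K\<bar> \<le> 1 / m" "\<bar>b\<bar> = ?q" "z \<le> 0" "l \<le> j" for K b z l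
    proof -
      have "exp z \<le> 1" using that(3) by simp
      have qq: "\<bar>b\<bar> ^ l \<le> (g + 2) ^ j" using ql[OF that(4)] that(2) by simp
      have "\<bar>K\<bar> * \<bar>b\<bar> ^ l * exp z \<le> (1 / m) * (g + 2) ^ j * 1"
        by (intro mult_mono) (use that(1) qq \<open>exp z \<le> 1\<close> m g in auto)
      then show ?thesis using B1(3) by simp
    qed
    consider "i = 1" | "i = 2" | "i = 3" | "i = 4" using i by force
    then show ?thesis
    proof cases
      case 1
      have "Cj_norm_le j (\<lambda>t. real k * cos (?d * t + - (?d * (pi/2))) + - real k) B"
      proof (rule Cj_cos)
        show "\<forall>t\<in>I0. \<bar>real k * cos (?d * t + - (?d * (pi/2))) + - real k\<bar> \<le> B"
        proof
          fix t assume t: "t \<in> I0"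
          define y where "y = ?d * (t - pi/2)"
          have yy: "?d * t + - (?d * (pi/2)) = y" unfolding y_def by (simp add: algebra_simps)
          have ab: "\<bar>t - pi/2\<bar> \<le> pi/2" using t by (auto simp: abs_if)
          have "\<bar>t - pi/2\<bar>^2 \<le> (pi/2)^2" by (rule power_mono[OF ab abs_ge_zero])
          then have tt: "(t - pi/2)^2 \<le> (pi/2)^2" by simp
          have "y^2 = ?d^2 * (t - pi/2)^2" unfolding y_def by (simp add: power_mult_distrib)
          also have "\<dots> \<le> ?d^2 * (pi/2)^2" using tt by (intro mult_left_mono) auto
          also have "\<dots> = (?d * (pi/2))^2" by (simp only: power_mult_distrib)
          finally have "y^2 \<le> (?d * (pi/2))^2" .
          have e1: "real k * cos y + - real k = - (real k * (1 - cos y))" by (simp add: algebra_simps)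
          have "real k * (1 - cos y) \<ge> 0" using one_minus_cos_le(2)[of y] kp by simp
          then have "\<bar>real k * cos y + - real k\<bar> = real k * (1 - cos y)" unfolding e1 by simp
          also have "\<dots> \<le> real k * (y^2 / 2)" using one_minus_cos_le(1)[of y] kp by (intro mult_left_mono) auto
          also have "\<dots> \<le> real k * ((?d * (pi/2))^2 / 2)" using \<open>y^2 \<le> _\<close> kp by (intro mult_left_mono) auto
          also have "\<dots> = (real k * (?d * (pi/2))) * (?d * (pi/2)) / 2" by (simp add: power2_eq_square)
          also have "\<dots> \<le> (1 / (2 * m)) * (1 / (2 * m)) / 2"
            using F(4,5) F(1) kp m by (intro divide_right_mono mult_mono) auto
          also have "\<dots> = 1 / (8 * m^2)" by (simp add: power2_eq_square)
          also have "\<dots> \<le> B" by (rule B1(1))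
          finally show "\<bar>real k * cos (?d * t + - (?d * (pi/2))) + - real k\<bar> \<le> B" unfolding yy .
        qed
        show "\<forall>l. 1 \<le> l \<longrightarrow> l \<le> j \<longrightarrow> \<bar>real k\<bar> * \<bar>?d\<bar> ^ l \<le> B"
          using kdl F(1) by simp
      qed
      then show ?thesis using 1 unfolding gf_def by simp
    next
      case 2
      have "Cj_norm_le j (\<lambda>t. real k * cos (?d * t + (- (?d * (pi/2)) - pi/2)) + 0) B"
      proof (rule Cj_cos)
        show "\<forall>t\<in>I0. \<bar>real k * cos (?d * t + (- (?d * (pi/2)) - pi/2)) + 0\<bar> \<le> B"
        proof
          fix t assume t: "t \<in> I0"
          define y where "y = ?d * (t - pi/2)"
          have yy: "?d * t + (- (?d * (pi/2)) - pi/2) = y - pi/2" unfolding y_def by (simp add: algebra_simps)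
          have ab: "\<bar>t - pi/2\<bar> \<le> pi/2" using t by (auto simp: abs_if)
          have ay: "\<bar>y\<bar> \<le> ?d * (pi/2)" unfolding y_def using F(1) ab by (simp add: abs_mult mult_left_mono)
          have "\<bar>real k * cos (y - pi/2) + 0\<bar> = real k * \<bar>sin y\<bar>" using kp by (simp add: cos_diff abs_mult)
          also have "\<dots> \<le> real k * \<bar>y\<bar>" using kp abs_sin_x_le_abs_x[of y] by (intro mult_left_mono) auto
          also have "\<dots> \<le> real k * (?d * (pi/2))" using ay kp by (intro mult_left_mono) auto
          also have "\<dots> \<le> B" using F(4) B1(4) by simp
          finally show "\<bar>real k * cos (?d * t + (- (?d * (pi/2)) - pi/2)) + 0\<bar> \<le> B" unfolding yy .
        qed
        show "\<forall>l. 1 \<le> l \<longrightarrow> l \<le> j \<longrightarrow> \<bar>real k\<bar> * \<bar>?d\<bar> ^ l \<le> B"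
          using kdl F(1) by simp
      qed
      then show ?thesis using 2 unfolding gf_def by simp
    next
      case 3
      have "Cj_norm_le j (\<lambda>t. K3 m g k * exp ((- ?q) * t + 0)) B"
      proof (rule Cj_exp, intro allI impI ballI)
        fix l t assume l: "l \<le> j" and t: "t \<in> I0"
        show "\<bar>K3 m g k\<bar> * \<bar>- ?q\<bar> ^ l * exp ((- ?q) * t + 0) \<le> B"
          by (rule ex_bound[OF K_bound(1)[OF m g k] _ _ l]) (use F(7) t in auto)
      qed
      then show ?thesis using 3 unfolding gf_def by simp
    next
      case 4
      have "Cj_norm_le j (\<lambda>t. K4 m g k * exp (?q * t + - (?q * pi))) B"
      proof (rule Cj_exp, intro allI impI ballI)
        fix l t assume l: "l \<le> j" and t: "t \<in> I0"
        have "?q * t + - (?q * pi) = ?q * (t - pi)" by (simp add: algebra_simps)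
        also have "\<dots> \<le> 0" using F(7) t by (simp add: mult_nonneg_nonpos)
        finally have z: "?q * t + - (?q * pi) \<le> 0" .
        show "\<bar>K4 m g k\<bar> * \<bar>?q\<bar> ^ l * exp (?q * t + - (?q * pi)) \<le> B"
          by (rule ex_bound[OF K_bound(2)[OF m g k] _ z l]) (use F(7) in auto)
      qed
      then show ?thesis using 4 unfolding gf_def by simp
    qed
  qed
  then show ?thesis by blast
qed



theorem lemma3p2:
  fixes m T \<gamma> :: real and lam :: "nat \<Rightarrow> real"
  assumes "m > 0" and "T > 0" and "\<gamma> = T / (pi * m)"
    and incr: "\<forall>k\<ge>1. lam k \<le> lam (Suc k)"
    and enum: "\<forall>mu. finite {k. k \<ge> 1 \<and> lam k = mu}
                    \<and> card {k. k \<ge> 1 \<and> lam k = mu} = eig_mult T \<gamma> mu"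
  shows "(\<lambda>k. lam k - real k ^ 4) \<in> O(\<lambda>k. real k ^ 2)
    \<and> (\<exists>(e :: nat \<Rightarrow> real \<Rightarrow> real) (g :: nat \<Rightarrow> nat \<Rightarrow> real \<Rightarrow> real).
          (\<forall>k\<ge>1. is_eigenfunction T \<gamma> (lam k) (e k))
        \<and> (\<forall>k\<ge>1. \<forall>t\<in>{0..pi}.
              e k t = sin (real k * t) + (1 / real k) * (\<Sum>i\<in>{1..4}. g i k t * fbasis i k t))
        \<and> (\<forall>j. \<exists>B. \<forall>i\<in>{1..4}. \<forall>k\<ge>1. Cj_norm_le j (g i k) B))"
proof -
  have m: "m > 0" using assms(1) .
  have g: "\<gamma> > 0" using assms(1,2,3) by simp
  have Tm: "T / (pi * \<gamma>) = m"
  proof -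
    have "pi * \<gamma> = T / m" using assms(1,3) by simp
    then show ?thesis using assms(1,2) by simp
  qed
  have lamEq: "lam k = Lam \<gamma> (omk m \<gamma> k)" if k: "k \<ge> 1" for k
  proof (rule enum_eq[where Lm = "\<lambda>k. Lam \<gamma> (omk m \<gamma> k)", OF _ incr _ k])
    fix i j :: nat assume "1 \<le> i" "i < j"
    then show "Lam \<gamma> (omk m \<gamma> i) < Lam \<gamma> (omk m \<gamma> j)" by (rule Lm_strict[OF g m])
  next
    fix mu
    show "finite {k. k \<ge> 1 \<and> lam k = mu} \<and> card {k. k \<ge> 1 \<and> lam k = mu}
        = (if \<exists>j\<ge>1. mu = Lam \<gamma> (omk m \<gamma> j) then 1 else 0)"
      using enum eig_mult_char[OF g m Tm, of mu] by simp
  qed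
  have A: "(\<lambda>k. lam k - real k ^ 4) \<in> O(\<lambda>k. real k ^ 2)"
    by (rule part_a[OF m g]) (use lamEq in blast)
  have B: "\<exists>(e :: nat \<Rightarrow> real \<Rightarrow> real) (g :: nat \<Rightarrow> nat \<Rightarrow> real \<Rightarrow> real).
          (\<forall>k\<ge>1. is_eigenfunction T \<gamma> (lam k) (e k))
        \<and> (\<forall>k\<ge>1. \<forall>t\<in>{0..pi}.
              e k t = sin (real k * t) + (1 / real k) * (\<Sum>i\<in>{1..4}. g i k t * fbasis i k t))
        \<and> (\<forall>j. \<exists>B. \<forall>i\<in>{1..4}. \<forall>k\<ge>1. Cj_norm_le j (g i k) B)"
  proof (intro exI[of _ "ef m \<gamma>"] exI[of _ "\<lambda>i k. gf m \<gamma> i k"] conjI allI impI ballI)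
    fix k :: nat assume k: "k \<ge> 1"
    show "is_eigenfunction T \<gamma> (lam k) (ef m \<gamma> k)"
      unfolding is_eigenfunction_def lamEq[OF k]
      using ef_in[OF g m Tm k] ef_nonzero[OF g m k] by blast
  next
    fix k :: nat and t :: real assume k: "k \<ge> 1"
    show "ef m \<gamma> k t = sin (real k * t) + (1 / real k) * (\<Sum>i\<in>{1..4}. gf m \<gamma> i k t * fbasis i k t)"
      by (rule decomp[OF k])
  next
    fix j :: nat
    show "\<exists>B. \<forall>i\<in>{1..4}. \<forall>k\<ge>1. Cj_norm_le j (gf m \<gamma> i k) B" by (rule gf_bounds[OF m g])
  qed
  show ?thesis using A B by blast
qed


end
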